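(* Let $\boldsymbol{\Sigma}$ be symmetric positive definite on $\mathbb{R}^d$, $f(\mathbf{x})=\mathrm{pos}(\mathbf{r}_*^{\mathsf T}\mathbf{x})$ with $\mathbf{r}_*\neq\mathbf{0}$, $q\ge2$, $1\le k\le q-1$, and let $\boldsymbol{\Sigma}_B,\boldsymbol{\Sigma}_D$ be the bag and pair covariance matrices of the oracle $\mathrm{Ex}(f,N(\mathbf{0},\boldsymbol{\Sigma}),q,k)$. Set $\kappa_1:=(2k/q-1)^2\frac2\pi$ and $\kappa_2:=\frac1{q-1}\frac kq(1-\frac kq)\frac{16}\pi$. For nonzero $\mathbf{r}$, let $\rho(\mathbf{r}):=\mathbf{r}^{\mathsf T}\boldsymbol{\Sigma}_D\mathbf{r}/\mathbf{r}^{\mathsf T}\boldsymbol{\Sigma}_B\mathbf{r}$ and $\gamma(\mathbf{r}):=\frac{\mathbf{r}^{\mathsf T}\boldsymbol{\Sigma}\mathbf{r}_*}{\sqrt{\mathbf{r}^{\mathsf T}\boldsymbol{\Sigma}\mathbf{r}}\sqrt{\mathbf{r}_*^{\mathsf T}\boldsymbol{\Sigma}\mathbf{r}_*}}$. Then $\mathbf{r}^{\mathsf T}\boldsymbol{\Sigma}_B\mathbf{r}=\mathbf{r}^{\mathsf T}\boldsymbol{\Sigma}\mathbf{r}(1-\gamma(\mathbf{r})^2\kappa_1)$, $\mathbf{r}^{\mathsf T}\boldsymbol{\Sigma}_D\mathbf{r}=\mathbf{r}^{\mathsf T}\boldsymbol{\Sigma}\mathbf{r}(2-\gamma(\mathbf{r})^2(2\kappa_1-\kappa_2))$,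 $\rho(\mathbf{r})=2+\frac{\gamma(\mathbf{r})^2\kappa_2}{1-\gamma(\mathbf{r})^2\kappa_1}$, and $\rho$ is maximized at $\mathbf{r}=\pm\mathbf{r}_*$.
   Context: $\mathrm{pos}(a)=1$ if $a>0$, else $0$. The bag oracle $\mathrm{Ex}(f,\mathcal{D},q,k)$ returns a bag of $q$ independent points, $k$ drawn from $\mathcal{D}$ conditioned on $f=1$ and $q-k$ from $\mathcal{D}$ conditioned on $f=0$. $\boldsymbol{\Sigma}_B:=\mathrm{Var}[\mathbf{X}]$ where $\mathbf{X}$ is a uniformly random point of a random bag; $\boldsymbol{\Sigma}_D:=\mathbb{E}[\mathbf{Z}\mathbf{Z}^{\mathsf T}]$ where $\mathbf{Z}=\mathbf{X}_1-\mathbf{X}_2$ for a uniformly random pair $(\mathbf{X}_1,\mathbf{X}_2)$ drawn without replacement from a random bag. *)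

theory Defs
  imports "HOL-Analysis.Analysis"
begin

definition pos :: "real \<Rightarrow> real" where
  "pos a = (if a > 0 then 1 else 0)"

text \<open>Density of the multivariate normal N(0,S) on real^'d (w.r.t. Lebesgue measure).\<close>
definition gauss_pdf :: "real^'d^'d \<Rightarrow> real^'d \<Rightarrow> real" where
  "gauss_pdf S x = exp (- (x \<bullet> (matrix_inv S *v x)) / 2) / sqrt ((2 * pi) ^ CARD('d) * det S)"

definition gauss :: "real^'d^'d \<Rightarrow> (real^'d) measure" where
  "gauss S = density lborel (\<lambda>x. ennreal (gauss_pdf S x))"

text \<open>Distribution of a bag from Ex(f,D,q,k): q independent points, the first k drawn from
  D conditioned on f = 1, the remaining q-k drawn from D conditioned on f = 0.\<close>
definition bag_measure :: "(real^'d) measure \<Rightarrow> (real^'d \<Rightarrow> real) \<Rightarrow> nat \<Rightarrow> nat \<Rightarrow> (nat \<Rightarrow> real^'d) measure" where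
  "bag_measure D f q k = PiM {..<q} (\<lambda>i. if i < k then uniform_measure D {x. f x = 1}
                                        else uniform_measure D {x. f x = 0})"

text \<open>A random bag together with a uniformly random index into it.\<close>
definition point_measure' :: "(real^'d) measure \<Rightarrow> (real^'d \<Rightarrow> real) \<Rightarrow> nat \<Rightarrow> nat \<Rightarrow> (nat \<times> (nat \<Rightarrow> real^'d)) measure" where
  "point_measure' D f q k = uniform_count_measure {..<q} \<Otimes>\<^sub>M bag_measure D f q k"

text \<open>A random bag together with a uniformly random ordered pair of distinct indices.\<close>
definition pair_point_measure :: "(real^'d) measure \<Rightarrow> (real^'d \<Rightarrow> real) \<Rightarrow> nat \<Rightarrow> nat \<Rightarrow> ((nat \<times> nat) \<times> (nat \<Rightarrow> real^'d)) measure" where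
  "pair_point_measure D f q k =
     uniform_count_measure {(i, j). i < q \<and> j < q \<and> i \<noteq> j} \<Otimes>\<^sub>M bag_measure D f q k"

text \<open>Sigma_B = Var[X], X a uniformly random point of a random bag.\<close>
definition Sigma_B :: "(real^'d) measure \<Rightarrow> (real^'d \<Rightarrow> real) \<Rightarrow> nat \<Rightarrow> nat \<Rightarrow> real^'d^'d" where
  "Sigma_B D f q k =
    (let M = point_measure' D f q k;
         X = (\<lambda>(i, b). b i);
         mu = (\<lambda>a. \<integral>\<omega>. (X \<omega>) $ a \<partial>M)
     in \<chi> a c. \<integral>\<omega>. ((X \<omega>) $ a - mu a) * ((X \<omega>) $ c - mu c) \<partial>M)"

text \<open>Sigma_D = E[Z Z^T], Z = X1 - X2 for a uniformly random pair drawn without replacement.\<close>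
definition Sigma_D :: "(real^'d) measure \<Rightarrow> (real^'d \<Rightarrow> real) \<Rightarrow> nat \<Rightarrow> nat \<Rightarrow> real^'d^'d" where
  "Sigma_D D f q k =
    (let M = pair_point_measure D f q k;
         Z = (\<lambda>((i, j), b). b i - b j)
     in \<chi> a c. \<integral>\<omega>. (Z \<omega>) $ a * (Z \<omega>) $ c \<partial>M)"

definition quad :: "real^'d^'d \<Rightarrow> real^'d \<Rightarrow> real" where
  "quad A r = r \<bullet> (A *v r)"

end

theory Submission
  imports Defs "HOL-Probability.Probability"
begin

(* ---- part 1 ---- *)
lemma det_shear:
  fixes m n :: "'n::finite"
  assumes "m \<noteq> n"
  shows "det (matrix (\<lambda>v::real^'n. \<chi> i. if i = m then v $ m + v $ n else v $ i)) = 1"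
proof -
  have "matrix (\<lambda>v::real^'n. \<chi> i. if i = m then v $ m + v $ n else v $ i)
      = (\<chi> k. if k = m then row m (mat 1) + 1 *s row n (mat 1) else row k (mat 1))"
    by (auto simp: matrix_def vec_eq_iff row_def mat_def axis_def)
  then show ?thesis using det_row_operation[OF assms, of "mat 1 :: real^'n^'n" 1] by simp
qed


proposition
 fixes f :: "real^'n::finite \<Rightarrow> real^'n"
  assumes "linear f" "S \<in> lmeasurable"
  shows measurable_linear_image': "(f ` S) \<in> lmeasurable"
    and measure_linear_image': "measure lebesgue (f ` S) = \<bar>det (matrix f)\<bar> * measure lebesgue S" (is "?Q f S")
proof -
  have "\<forall>S \<in> lmeasurable. (f ` S) \<in> lmeasurable \<and> ?Q f S"
  proof (rule induct_linear_elementary [OF \<open>linear f\<close>]; intro ballI)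
    fix f g and S :: "(real,'n) vec set"
    assume "linear f" and "linear g"
      and f [rule_format]: "\<forall>S \<in> lmeasurable. f ` S \<in> lmeasurable \<and> ?Q f S"
      and g [rule_format]: "\<forall>S \<in> lmeasurable. g ` S \<in> lmeasurable \<and> ?Q g S"
      and S: "S \<in> lmeasurable"
    then have gS: "g ` S \<in> lmeasurable"
      by blast
    show "(f \<circ> g) ` S \<in> lmeasurable \<and> ?Q (f \<circ> g) S"
      using f [OF gS] g [OF S] matrix_compose [OF \<open>linear g\<close> \<open>linear f\<close>]
      by (simp add: o_def image_comp abs_mult det_mul)
  next
    fix f :: "real^'n::_ \<Rightarrow> real^'n::_" and i and S :: "(real^'n::_) set"
    assume "linear f" and 0: "\<And>x. f x $ i = 0" and "S \<in> lmeasurable"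
    then have "\<not> inj f"
      by (metis (full_types) linear_injective_imp_surjective one_neq_zero surjE vec_component)
    have detf: "det (matrix f) = 0"
      using \<open>\<not> inj f\<close> det_nz_iff_inj[OF \<open>linear f\<close>] by blast
    show "f ` S \<in> lmeasurable \<and> ?Q f S"
    proof
      show "f ` S \<in> lmeasurable"
        using lmeasurable_iff_indicator_has_integral \<open>linear f\<close> \<open>\<not> inj f\<close> negligible_UNIV negligible_linear_singular_image by blast
      have "measure lebesgue (f ` S) = 0"
        by (meson \<open>\<not> inj f\<close> \<open>linear f\<close> negligible_imp_measure0 negligible_linear_singular_image)
      also have "\<dots> = \<bar>det (matrix f)\<bar> * measure lebesgue S"
        by (simp add: detf)
      finally show "?Q f S" .
    qed
  next
    fix c and S :: "(real^'n::_) set"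
    assume "S \<in> lmeasurable"
    show "(\<lambda>a. \<chi> i. c i * a $ i) ` S \<in> lmeasurable \<and> ?Q (\<lambda>a. \<chi> i. c i * a $ i) S"
    proof
      show "(\<lambda>a. \<chi> i. c i * a $ i) ` S \<in> lmeasurable"
        by (simp add: \<open>S \<in> lmeasurable\<close> measurable_stretch)
      show "?Q (\<lambda>a. \<chi> i. c i * a $ i) S"
        by (simp add: measure_stretch [OF \<open>S \<in> lmeasurable\<close>, of c] axis_def matrix_def det_diagonal)
    qed
  next
    fix m :: "'n" and n :: "'n" and S :: "(real, 'n) vec set"
    assume "m \<noteq> n" and "S \<in> lmeasurable"
    let ?h = "\<lambda>v::(real, 'n) vec. \<chi> i. v $ Transposition.transpose m n i"
    have lin: "linear ?h"
      by (rule linearI) (simp_all add: plus_vec_def scaleR_vec_def)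
    have meq: "measure lebesgue ((\<lambda>v::(real, 'n) vec. \<chi> i. v $ Transposition.transpose m n i) ` cbox a b)
             = measure lebesgue (cbox a b)" for a b
    proof (cases "cbox a b = {}")
      case True then show ?thesis
        by simp
    next
      case False
      then have him: "?h ` (cbox a b) \<noteq> {}"
        by blast
      have eq: "?h ` (cbox a b) = cbox (?h a) (?h b)"
        by (auto simp: image_iff lambda_swap_Galois mem_box_cart) (metis transpose_involutory)+
      show ?thesis
        using him prod.permute [OF permutes_swap_id, where S=UNIV and g="\<lambda>i. (b - a)$i", symmetric]
        by (simp add: eq content_cbox_cart False)
    qed
    have "(\<chi> i j. if Transposition.transpose m n i = j then 1 else 0) = (\<chi> i j. if j = Transposition.transpose m n i then 1 else (0::real))"
      by (auto intro!: Cart_lambda_cong)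
    then have "matrix ?h = transpose(\<chi> i j. mat 1 $ i $ Transposition.transpose m n j)"
      by (auto simp: matrix_eq transpose_def axis_def mat_def matrix_def)
    then have 1: "\<bar>det (matrix ?h)\<bar> = 1"
      by (simp add: det_permute_columns permutes_swap_id sign_swap_id abs_mult)
    show "?h ` S \<in> lmeasurable \<and> ?Q ?h S"
      using measure_linear_sufficient [OF lin \<open>S \<in> lmeasurable\<close>] meq 1 by force
  next
    fix m n :: "'n" and S :: "(real, 'n) vec set"
    assume "m \<noteq> n" and "S \<in> lmeasurable"
    let ?h = "\<lambda>v::(real, 'n) vec. \<chi> i. if i = m then v $ m + v $ n else v $ i"
    have lin: "linear ?h"
      by (rule linearI) (auto simp: algebra_simps plus_vec_def scaleR_vec_def vec_eq_iff)
    have 1: "det(matrix ?h) = 1" using \<open>m \<noteq> n\<close> by (rule det_shear)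
    have meq: "measure lebesgue (?h ` (cbox a b)) = measure lebesgue (cbox a b)" for a b
    proof (cases "cbox a b = {}")
      case True then show ?thesis by simp
    next
      case False
      then have ne: "(+) (\<chi> i. if i = n then - a $ n else 0) ` cbox a b \<noteq> {}"
        by auto
      let ?v = "\<chi> i. if i = n then - a $ n else 0"
      have "?h ` cbox a b
            = (+) (\<chi> i. if i = m \<or> i = n then a $ n else 0) ` ?h ` (+) ?v ` (cbox a b)"
        using \<open>m \<noteq> n\<close> unfolding image_comp o_def by (force simp: vec_eq_iff)
      then have "measure lebesgue (?h ` (cbox a b))
               = measure lebesgue ((\<lambda>v. \<chi> i. if i = m then v $ m + v $ n else v $ i) `
                                   (+) ?v ` cbox a b)"
        by (rule ssubst) (rule measure_translation)
      also have "\<dots> = measure lebesgue ((\<lambda>v. \<chi> i. if i = m then v $ m + v $ n else v $ i) ` cbox (?v +a) (?v + b))"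
        by (metis (no_types, lifting) cbox_translation)
      also have "\<dots> = measure lebesgue ((+) ?v ` cbox a b)"
        apply (subst measure_shear_interval)
        using \<open>m \<noteq> n\<close> ne apply auto
        apply (simp add: cbox_translation)
        by (metis cbox_borel cbox_translation measure_completion sets_lborel)
      also have "\<dots> = measure lebesgue (cbox a b)"
        by (rule measure_translation)
        finally show ?thesis .
      qed
    show "?h ` S \<in> lmeasurable \<and> ?Q ?h S"
      using measure_linear_sufficient [OF lin \<open>S \<in> lmeasurable\<close>] meq 1 by force
  qed
  with assms show "(f ` S) \<in> lmeasurable" "?Q f S"
    by metis+
qed



lemma matrix_inv_both:
  assumes "invertible (A::'a::semiring_1^'n^'m)"
  shows "A ** matrix_inv A = mat 1" "matrix_inv A ** A = mat 1"
  using someI_ex[OF assms[unfolded invertible_def]] unfolding matrix_inv_def by auto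

lemma lborel_linear:
  fixes A :: "real^'n::finite^'n"
  assumes inv: "invertible A"
  shows "lborel = density (distr lborel borel ((*v) A)) (\<lambda>_. ennreal \<bar>det A\<bar>)"
proof (rule lborel_eqI)
  fix l u :: "real^'n" assume le: "\<And>b. b \<in> Basis \<Longrightarrow> l \<bullet> b \<le> u \<bullet> b"
  define B where "B = matrix_inv A"
  have AB: "A ** B = mat 1" "B ** A = mat 1" using inv unfolding B_def
    by (simp_all add: matrix_inv_both)
  have detAB: "det A * det B = 1" using AB(1) by (metis det_I det_mul)
  have Am[measurable]: "(*v) A \<in> borel \<rightarrow>\<^sub>M borel"
    by (intro borel_measurable_continuous_onI linear_continuous_on matrix_vector_mul_bounded_linear)
  have pre: "(*v) A -` box l u = (*v) B ` box l u"
  proof (intro set_eqI iffI)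
    fix x assume "x \<in> (*v) A -` box l u"
    then have "A *v x \<in> box l u" by simp
    moreover have "x = B *v (A *v x)" by (simp add: matrix_vector_mul_assoc AB)
    ultimately show "x \<in> (*v) B ` box l u" by blast
  next
    fix x assume "x \<in> (*v) B ` box l u"
    then obtain y where "y \<in> box l u" "x = B *v y" by blast
    then show "x \<in> (*v) A -` box l u" by (simp add: matrix_vector_mul_assoc AB)
  qed
  have lin: "linear ((*v) B)" by (simp add: matrix_vector_mul_linear)
  have meas: "(*v) B ` box l u \<in> lmeasurable"
    by (rule measurable_linear_image'[OF lin]) simp
  have bor: "(*v) A -` box l u \<in> sets borel" using measurable_sets[OF Am, of "box l u"] by simp
  have "emeasure lborel ((*v) A -` box l u) = emeasure lebesgue ((*v) B ` box l u)"
    using bor pre by (simp add: emeasure_completion)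
  also have "\<dots> = ennreal (measure lebesgue ((*v) B ` box l u))"
    using meas by (simp add: emeasure_eq_measure2)
  also have "measure lebesgue ((*v) B ` box l u) = \<bar>det B\<bar> * measure lebesgue (box l u)"
    using measure_linear_image'[OF lin, of "box l u"] by (simp add: matrix_of_matrix_vector_mul)
  also have "measure lebesgue (box l u) = (\<Prod>b\<in>Basis. (u - l) \<bullet> b)"
    using le by (simp add: measure_lborel_box_eq measure_completion)
  finally have e: "emeasure lborel ((*v) A -` box l u) = ennreal (\<bar>det B\<bar> * (\<Prod>b\<in>Basis. (u - l) \<bullet> b))" .
  have "emeasure (density (distr lborel borel ((*v) A)) (\<lambda>_. ennreal \<bar>det A\<bar>)) (box l u)
      = ennreal \<bar>det A\<bar> * emeasure lborel ((*v) A -` box l u)"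
    by (simp add: emeasure_density emeasure_distr nn_integral_cmult_indicator)
  also have "\<dots> = ennreal (\<Prod>b\<in>Basis. (u - l) \<bullet> b)"
    unfolding e using detAB le
    by (subst ennreal_mult'[symmetric]) (auto simp: abs_mult[symmetric] mult.assoc[symmetric] prod_nonneg inner_diff_left)
  finally show "emeasure (density (distr lborel borel ((*v) A)) (\<lambda>_. ennreal \<bar>det A\<bar>)) (box l u) = (\<Prod>b\<in>Basis. (u - l) \<bullet> b)"
    using le by (simp add: prod_nonneg inner_diff_left)
qed simp

(* ---- part 2 ---- *)
lemma Basis_vec_range: "(Basis :: (real^'n::finite) set) = range (\<lambda>i. axis i 1)"
  by (auto simp: Basis_vec_def)

lemma lborel_prod_integral:
  fixes g :: "'n::finite \<Rightarrow> real \<Rightarrow> real"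
  assumes int: "\<And>i. integrable lborel (g i)"
  shows "integrable lborel (\<lambda>y::real^'n. \<Prod>i\<in>UNIV. g i (y$i))"
    and "(\<integral>y. (\<Prod>i\<in>UNIV. g i (y$i)) \<partial>(lborel::(real^'n) measure)) = (\<Prod>i\<in>UNIV. \<integral>t. g i t \<partial>lborel)"
proof -
  interpret product_sigma_finite "\<lambda>_::real^'n. (lborel::real measure)"
    by standard
  define G where "G b = g (SOME i. b = axis i 1)" for b :: "real^'n"
  have G: "G (axis i 1) = g i" for i
    unfolding G_def by (rule arg_cong[of _ _ g], rule some_equality) (auto simp: axis_eq_axis)
  have injax: "inj (\<lambda>i::'n. axis i (1::real))" by (auto simp: inj_def axis_eq_axis)
  have eq: "(\<Prod>i\<in>UNIV. g i (y$i)) = (\<Prod>b\<in>Basis. G b (y \<bullet> b))" for y :: "real^'n"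
    unfolding Basis_vec_range by (subst prod.reindex[OF injax]) (simp add: G inner_axis)
  define T where "T = (\<lambda>f::real^'n \<Rightarrow> real. \<Sum>b\<in>Basis. f b *\<^sub>R b)"
  have Tm: "T \<in> (\<Pi>\<^sub>M b\<in>Basis. lborel) \<rightarrow>\<^sub>M borel" unfolding T_def by measurable
  have Tb: "T f \<bullet> b = f b" if "b \<in> Basis" for f b
    using that unfolding T_def by (simp add: inner_sum_left inner_Basis if_distrib sum.delta cong: if_cong)
  have gm[measurable]: "G b \<in> borel_measurable borel" for b unfolding G_def using int by auto
  have intG: "integrable lborel (G b)" for b unfolding G_def using int by auto
  have m: "(\<lambda>y::real^'n. \<Prod>b\<in>Basis. G b (y \<bullet> b)) \<in> borel_measurable borel" by measurable
  have intP: "integrable (\<Pi>\<^sub>M b\<in>Basis. lborel) (\<lambda>f. \<Prod>b\<in>Basis. G b (f b))"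
    by (rule product_integrable_prod) (auto intro: intG)
  have cong: "integrable (\<Pi>\<^sub>M b\<in>Basis. lborel) (\<lambda>f. \<Prod>b\<in>Basis. G b (T f \<bullet> b)) \<longleftrightarrow>
      integrable (\<Pi>\<^sub>M b\<in>Basis. lborel) (\<lambda>f. \<Prod>b\<in>Basis. G b (f b))"
    by (rule Bochner_Integration.integrable_cong[OF refl]) (auto intro!: prod.cong simp: Tb)
  show "integrable lborel (\<lambda>y::real^'n. \<Prod>i\<in>UNIV. g i (y$i))"
    unfolding eq lborel_eq[where 'a="real^'n"] T_def[symmetric]
    using integrable_distr_eq[OF Tm m] cong intP by simp
  have "(\<integral>y. (\<Prod>i\<in>UNIV. g i (y$i)) \<partial>(lborel::(real^'n) measure)) =
      (\<integral>f. (\<Prod>b\<in>Basis. G b (T f \<bullet> b)) \<partial>(\<Pi>\<^sub>M b\<in>Basis. lborel))"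
    unfolding eq lborel_eq[where 'a="real^'n"] T_def[symmetric]
    using integral_distr[OF Tm m] by simp
  also have "\<dots> = (\<integral>f. (\<Prod>b\<in>Basis. G b (f b)) \<partial>(\<Pi>\<^sub>M b\<in>Basis. lborel))"
    by (rule Bochner_Integration.integral_cong[OF refl]) (auto intro!: prod.cong simp: Tb)
  also have "\<dots> = (\<Prod>b\<in>Basis. \<integral>t. G b t \<partial>lborel)"
    by (rule product_integral_prod) (auto intro: intG)
  also have "\<dots> = (\<Prod>i\<in>UNIV. \<integral>t. g i t \<partial>lborel)"
    unfolding Basis_vec_range by (subst prod.reindex[OF injax]) (simp add: G)
  finally show "(\<integral>y. (\<Prod>i\<in>UNIV. g i (y$i)) \<partial>(lborel::(real^'n) measure)) = (\<Prod>i\<in>UNIV. \<integral>t. g i t \<partial>lborel)" .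
qed

(* ---- part 3 ---- *)
lemma sym_half:
  fixes g :: "real \<Rightarrow> real"
  assumes int: "integrable lborel g" and sym: "\<And>t. g (-t) = g t"
  shows "integrable lborel (\<lambda>t. g t * indicator {0<..} t)"
    and "integrable lborel (\<lambda>t. g t * indicator {..0} t)"
    and "(\<integral>t. g t * indicator {0<..} t \<partial>lborel) = (\<integral>t. g t \<partial>lborel) / 2"
    and "(\<integral>t. g t * indicator {..0} t \<partial>lborel) = (\<integral>t. g t \<partial>lborel) / 2"
proof -
  show i1: "integrable lborel (\<lambda>t. g t * indicator {0<..} t)"
    by (rule integrable_real_mult_indicator) (auto intro: int)
  show i2: "integrable lborel (\<lambda>t. g t * indicator {..0} t)"
    by (rule integrable_real_mult_indicator) (auto intro: int)
  have gm[measurable]: "g \<in> borel_measurable borel" using int by auto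
  have "(\<integral>t. g t * indicator {0<..} t \<partial>lborel) = \<bar>-1\<bar> *\<^sub>R (\<integral>t. g (0 + (-1) * t) * indicator {0<..} (0 + (-1) * t) \<partial>lborel)"
    by (rule lborel_integral_real_affine) simp
  also have "\<dots> = (\<integral>t. g t * indicator {..<0} t \<partial>lborel)"
    using sym by (auto intro!: Bochner_Integration.integral_cong split: split_indicator)
  also have "\<dots> = (\<integral>t. g t * indicator {..0} t \<partial>lborel)"
    by (intro integral_cong_AE) (auto intro: AE_mp[OF AE_lborel_singleton[of 0]] split: split_indicator)
  finally have e1: "(\<integral>t. g t * indicator {0<..} t \<partial>lborel) = (\<integral>t. g t * indicator {..0} t \<partial>lborel)" .
  have "(\<integral>t. g t \<partial>lborel) = (\<integral>t. g t * indicator {0<..} t + g t * indicator {..0} t \<partial>lborel)"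
    by (intro Bochner_Integration.integral_cong) (auto split: split_indicator)
  also have "\<dots> = (\<integral>t. g t * indicator {0<..} t \<partial>lborel) + (\<integral>t. g t * indicator {..0} t \<partial>lborel)"
    using i1 i2 by (rule Bochner_Integration.integral_add)
  finally have e2: "(\<integral>t. g t \<partial>lborel) = (\<integral>t. g t * indicator {0<..} t \<partial>lborel) + (\<integral>t. g t * indicator {..0} t \<partial>lborel)" .
  show "(\<integral>t. g t * indicator {0<..} t \<partial>lborel) = (\<integral>t. g t \<partial>lborel) / 2"
    using e1 e2 by simp
  show "(\<integral>t. g t * indicator {..0} t \<partial>lborel) = (\<integral>t. g t \<partial>lborel) / 2"
    using e1 e2 by simp
qed

lemma std_1d:
  assumes "a \<le> (2::nat)"
  shows "integrable lborel (\<lambda>t. std_normal_density t * t ^ a)"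
    and "(\<integral>t. std_normal_density t * t ^ a \<partial>lborel) = (if a = 1 then 0 else 1)"
proof -
  show "integrable lborel (\<lambda>t. std_normal_density t * t ^ a)"
    by (rule integrable_std_normal_moment)
  have "a = 0 \<or> a = 1 \<or> a = 2" using assms by auto
  then show "(\<integral>t. std_normal_density t * t ^ a \<partial>lborel) = (if a = 1 then 0 else 1)"
  proof (elim disjE)
    assume "a = 0" then show ?thesis by simp
  next
    assume "a = 1" then show ?thesis using integral_std_normal_moment_odd[of 0] by simp
  next
    assume "a = 2" then show ?thesis using integral_std_normal_moment_even[of 1] by simp
  qed
qed

definition hsgn :: "real set \<Rightarrow> real" where
  "hsgn H = (if H = {0<..} then 1 else -1)"

lemma half_1d:
  assumes "a \<le> (2::nat)" and H: "H = {0<..} \<or> H = {..0}"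
  shows "integrable lborel (\<lambda>t. std_normal_density t * t ^ a * indicator H t)"
    and "(\<integral>t. std_normal_density t * t ^ a * indicator H t \<partial>lborel) =
           (if a = 1 then hsgn H / sqrt (2 * pi) else 1 / 2)"
proof -
  show "integrable lborel (\<lambda>t. std_normal_density t * t ^ a * indicator H t)"
    using H by (auto intro!: integrable_real_mult_indicator integrable_std_normal_moment)
  have sq: "sqrt (2 / pi) / 2 = 1 / sqrt (2 * pi)"
    by (simp add: real_sqrt_divide real_sqrt_mult field_simps)
  have "a = 0 \<or> a = 1 \<or> a = 2" using assms by auto
  have sy: "\<And>t. std_normal_density (-t) = std_normal_density t" by (simp add: normal_density_def)
  have sy2: "\<And>t. std_normal_density (-t) * (-t)^2 = std_normal_density t * t^2" by (simp add: normal_density_def)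
  have sy3: "\<And>t. std_normal_density (-t) * \<bar>-t\<bar>^1 = std_normal_density t * \<bar>t\<bar>^1" by (simp add: normal_density_def)
  from \<open>a = 0 \<or> a = 1 \<or> a = 2\<close> show "(\<integral>t. std_normal_density t * t ^ a * indicator H t \<partial>lborel) =
           (if a = 1 then hsgn H / sqrt (2 * pi) else 1 / 2)"
  proof (elim disjE)
    assume a: "a = 0"
    have "integrable lborel (\<lambda>t. std_normal_density t)" by simp
    note s = sym_half[OF this sy]
    show ?thesis using H a s(3,4) by auto
  next
    assume a: "a = 2"
    have "integrable lborel (\<lambda>t. std_normal_density t * t^2)" by (rule integrable_std_normal_moment)
    note s = sym_half[OF this sy2]
    show ?thesis using H a s(3,4) integral_std_normal_moment_even[of 1] by auto
  next
    assume a: "a = 1"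
    have i: "integrable lborel (\<lambda>t. std_normal_density t * \<bar>t\<bar>^1)" by (rule integrable_std_normal_moment_abs)
    have v: "(\<integral>t. std_normal_density t * \<bar>t\<bar>^1 \<partial>lborel) = sqrt (2/pi)"
      using integral_std_normal_moment_abs_odd[of 0] by simp
    note s = sym_half[OF i sy3]
    have p: "(\<integral>t. std_normal_density t * t ^ 1 * indicator {0<..} t \<partial>lborel) = 1 / sqrt (2 * pi)"
    proof -
      have "(\<integral>t. std_normal_density t * t ^ 1 * indicator {0<..} t \<partial>lborel) =
          (\<integral>t. std_normal_density t * \<bar>t\<bar>^1 * indicator {0<..} t \<partial>lborel)"
        by (intro Bochner_Integration.integral_cong) (auto split: split_indicator)
      also have "\<dots> = 1 / sqrt (2 * pi)" using s(3) v sq by (simp add: normal_density_def)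
      finally show ?thesis .
    qed
    have n: "(\<integral>t. std_normal_density t * t ^ 1 * indicator {..0} t \<partial>lborel) = - 1 / sqrt (2 * pi)"
    proof -
      have "(\<integral>t. std_normal_density t * t ^ 1 * indicator {..0} t \<partial>lborel) =
          (\<integral>t. - (std_normal_density t * \<bar>t\<bar>^1 * indicator {..0} t) \<partial>lborel)"
        by (intro Bochner_Integration.integral_cong) (auto split: split_indicator)
      also have "\<dots> = - 1 / sqrt (2 * pi)" using s(4) v sq by (simp add: normal_density_def)
      finally show ?thesis .
    qed
    show ?thesis using H a p n by (auto simp: hsgn_def)
  qed
qed

(* ---- part 4 ---- *)
definition phiv :: "real^'n::finite \<Rightarrow> real" where
  "phiv y = (\<Prod>i\<in>UNIV. std_normal_density (y$i))"

lemma phiv_nonneg: "0 \<le> phiv y" unfolding phiv_def by (simp add: prod_nonneg)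

lemma phiv_measurable[measurable]: "phiv \<in> borel_measurable borel"
  unfolding phiv_def[abs_def] by measurable

definition cfac :: "real set \<Rightarrow> bool \<Rightarrow> nat \<Rightarrow> real" where
  "cfac H b a = (if b then (if a = 1 then hsgn H / sqrt (2 * pi) else 1 / 2) else (if a = 1 then 0 else 1))"

lemma gen_moment:
  fixes a :: "'n::finite \<Rightarrow> nat" and jz :: 'n
  assumes a: "\<And>i. a i \<le> 2" and H: "H = {0<..} \<or> H = {..0}"
  shows "integrable lborel (\<lambda>y::real^'n. \<Prod>i\<in>UNIV. std_normal_density (y$i) * (y$i)^(a i) * (if i = jz then indicator H (y$i) else 1))"
    and "(\<integral>y. (\<Prod>i\<in>UNIV. std_normal_density (y$i) * (y$i)^(a i) * (if i = jz then indicator H (y$i) else 1)) \<partial>lborel)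
         = (\<Prod>i\<in>UNIV. cfac H (i = jz) (a i))"
proof -
  define g where "g i t = std_normal_density t * t^(a i) * (if i = jz then indicator H t else 1)" for i t
  have int: "integrable lborel (g i)" for i
    using half_1d(1)[OF a H, of i] std_1d(1)[OF a, of i] unfolding g_def by (cases "i = jz") auto
  have val: "(\<integral>t. g i t \<partial>lborel) = cfac H (i = jz) (a i)" for i
    using half_1d(2)[OF a H, of i] std_1d(2)[OF a, of i] unfolding g_def cfac_def by (cases "i = jz") auto
  show "integrable lborel (\<lambda>y::real^'n. \<Prod>i\<in>UNIV. std_normal_density (y$i) * (y$i)^(a i) * (if i = jz then indicator H (y$i) else 1))"
    using lborel_prod_integral(1)[of g, OF int] unfolding g_def .
  show "(\<integral>y. (\<Prod>i\<in>UNIV. std_normal_density (y$i) * (y$i)^(a i) * (if i = jz then indicator H (y$i) else 1)) \<partial>lborel)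
         = (\<Prod>i\<in>UNIV. cfac H (i = jz) (a i))"
    using lborel_prod_integral(2)[of g, OF int] unfolding g_def val[unfolded g_def] .
qed

lemma prod_split_eq:
  fixes y :: "real^'n::finite"
  shows "(\<Prod>i\<in>UNIV. std_normal_density (y$i) * (y$i)^(a i) * (if i = jz then indicator H (y$i) else 1))
       = phiv y * (\<Prod>i\<in>UNIV. (y$i)^(a i)) * indicator H (y$jz)"
  unfolding phiv_def prod.distrib by (simp add: prod.If_cases)

lemma mom2:
  fixes j k jz :: "'n::finite"
  assumes H: "H = {0<..} \<or> H = {..0}"
  shows "integrable lborel (\<lambda>y::real^'n. phiv y * (y$j * y$k) * indicator H (y$jz))"
    and "(\<integral>y. phiv y * (y$j * y$k) * indicator H (y$jz) \<partial>lborel) = (if j = k then 1/2 else 0)"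
proof -
  define a where "a i = (if i = j then 1 else 0) + (if i = k then 1 else (0::nat))" for i
  have a: "a i \<le> 2" for i unfolding a_def by auto
  have pa: "(\<Prod>i\<in>UNIV. (y$i)^(a i)) = y$j * y$k" for y :: "real^'n"
    unfolding a_def power_add prod.distrib by (simp add: if_distrib prod.If_cases cong: if_cong)
  note g = gen_moment[where a=a and jz=jz, OF a H]
  show "integrable lborel (\<lambda>y::real^'n. phiv y * (y$j * y$k) * indicator H (y$jz))"
    using g(1) unfolding prod_split_eq pa .
  have "(\<integral>y. phiv y * (y$j * y$k) * indicator H (y$jz) \<partial>lborel) = (\<Prod>i\<in>UNIV. cfac H (i = jz) (a i))"
    using g(2) unfolding prod_split_eq pa .
  also have "\<dots> = (if j = k then 1/2 else 0)"
  proof (cases "j = k")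
    case True
    then have "cfac H (i = jz) (a i) = (if i = jz then 1/2 else 1)" for i
      unfolding a_def cfac_def by auto
    then show ?thesis using True by (simp add: prod.If_cases)
  next
    case False
    then obtain i where i: "i \<in> {j, k}" "i \<noteq> jz" by auto
    then have "cfac H (i = jz) (a i) = 0" using False unfolding a_def cfac_def by auto
    then show ?thesis using False by (intro trans[OF prod_zero]) auto
  qed
  finally show "(\<integral>y. phiv y * (y$j * y$k) * indicator H (y$jz) \<partial>lborel) = (if j = k then 1/2 else 0)" .
qed

lemma mom1:
  fixes j jz :: "'n::finite"
  assumes H: "H = {0<..} \<or> H = {..0}"
  shows "integrable lborel (\<lambda>y::real^'n. phiv y * y$j * indicator H (y$jz))"
    and "(\<integral>y. phiv y * y$j * indicator H (y$jz) \<partial>lborel) = (if j = jz then hsgn H / sqrt (2 * pi) else 0)"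
proof -
  define a where "a i = (if i = j then 1 else (0::nat))" for i
  have a: "a i \<le> 2" for i unfolding a_def by auto
  have pa: "(\<Prod>i\<in>UNIV. (y$i)^(a i)) = y$j" for y :: "real^'n"
    unfolding a_def by (simp add: if_distrib prod.If_cases cong: if_cong)
  note g = gen_moment[where a=a and jz=jz, OF a H]
  show "integrable lborel (\<lambda>y::real^'n. phiv y * y$j * indicator H (y$jz))"
    using g(1) unfolding prod_split_eq pa .
  have "(\<integral>y. phiv y * y$j * indicator H (y$jz) \<partial>lborel) = (\<Prod>i\<in>UNIV. cfac H (i = jz) (a i))"
    using g(2) unfolding prod_split_eq pa .
  also have "\<dots> = (if j = jz then hsgn H / sqrt (2 * pi) else 0)"
  proof (cases "j = jz")
    case True
    then have "cfac H (i = jz) (a i) = (if i = jz then hsgn H / sqrt (2 * pi) else 1)" for i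
      unfolding a_def cfac_def by auto
    then show ?thesis using True by (simp add: prod.If_cases)
  next
    case False
    then have "cfac H (j = jz) (a j) = 0" unfolding a_def cfac_def by auto
    then show ?thesis using False by (intro trans[OF prod_zero]) (auto intro!: exI[of _ j])
  qed
  finally show "(\<integral>y. phiv y * y$j * indicator H (y$jz) \<partial>lborel) = (if j = jz then hsgn H / sqrt (2 * pi) else 0)" .
qed

lemma mom0:
  fixes jz :: "'n::finite"
  assumes H: "H = {0<..} \<or> H = {..0}"
  shows "integrable lborel (\<lambda>y::real^'n. phiv y * indicator H (y$jz))"
    and "(\<integral>y. phiv y * indicator H (y$jz) \<partial>lborel) = 1/2"
proof -
  define a where "a i = (0::nat)" for i :: 'n
  have a: "a i \<le> 2" for i unfolding a_def by auto
  have pa: "(\<Prod>i\<in>UNIV. (y$i)^(a i)) = 1" for y :: "real^'n"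
    unfolding a_def by simp
  note g = gen_moment[where a=a and jz=jz, OF a H]
  show "integrable lborel (\<lambda>y::real^'n. phiv y * indicator H (y$jz))"
    using g(1) unfolding prod_split_eq pa by simp
  have "(\<integral>y. phiv y * indicator H (y$jz) \<partial>lborel) = (\<Prod>i\<in>UNIV. cfac H (i = jz) (a i))"
    using g(2) unfolding prod_split_eq pa by simp
  also have "\<dots> = 1/2"
  proof -
    have "cfac H (i = jz) (a i) = (if i = jz then 1/2 else 1)" for i
      unfolding a_def cfac_def by auto
    then show ?thesis by (simp add: prod.If_cases)
  qed
  finally show "(\<integral>y. phiv y * indicator H (y$jz) \<partial>lborel) = 1/2" .
qed

(* ---- part 5 ---- *)
lemma symip:
  fixes P :: "real^'n::finite^'n"
  assumes "transpose P = P"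
  shows "x \<bullet> (P *v y) = y \<bullet> (P *v x)"
proof -
  have "x \<bullet> (P *v y) = (x v* P) \<bullet> y" by (simp add: dot_lmul_matrix)
  also have "x v* P = transpose P *v x" by simp
  finally show ?thesis using assms by (simp add: inner_commute)
qed

definition ONP :: "real^'n::finite^'n \<Rightarrow> (real^'n) set \<Rightarrow> bool" where
  "ONP P C = (\<forall>c\<in>C. \<forall>c'\<in>C. c \<bullet> (P *v c') = (if c = c' then 1 else 0))"

lemma gs:
  fixes P :: "real^'n::finite^'n"
  assumes symP: "transpose P = P" and posP: "\<And>x. x \<noteq> 0 \<Longrightarrow> x \<bullet> (P *v x) > 0"
    and fin: "finite B"
  shows "finite C0 \<Longrightarrow> ONP P C0 \<Longrightarrow> \<exists>C. finite C \<and> ONP P C \<and> C0 \<subseteq> C \<and> C0 \<union> B \<subseteq> span C"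
  using fin
proof (induction B rule: finite_induct)
  case empty
  then show ?case by (intro exI[of _ C0]) (auto intro: span_base)
next
  case (insert b B)
  from insert.IH[OF insert.prems] obtain C where C: "finite C" "ONP P C" "C0 \<subseteq> C" "C0 \<union> B \<subseteq> span C"
    by blast
  show ?case
  proof (cases "b \<in> span C")
    case True
    then show ?thesis using C by (intro exI[of _ C]) auto
  next
    case False
    define w where "w = b - (\<Sum>c\<in>C. (b \<bullet> (P *v c)) *\<^sub>R c)"
    have wc: "w \<bullet> (P *v c) = 0" if "c \<in> C" for c
    proof -
      have "(\<Sum>c'\<in>C. (b \<bullet> (P *v c')) * (c' \<bullet> (P *v c))) = (\<Sum>c'\<in>C. if c' = c then b \<bullet> (P *v c') else 0)"
        using C(2) that unfolding ONP_def by (intro sum.cong) auto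
      also have "\<dots> = b \<bullet> (P *v c)" using C(1) that by simp
      finally show ?thesis unfolding w_def by (simp add: inner_diff_left inner_sum_left)
    qed
    have wnz: "w \<noteq> 0"
    proof
      assume "w = 0"
      then have "b = (\<Sum>c\<in>C. (b \<bullet> (P *v c)) *\<^sub>R c)" unfolding w_def by simp
      also have "\<dots> \<in> span C" by (intro span_sum span_scale span_base)
      finally show False using False by simp
    qed
    define s where "s = sqrt (w \<bullet> (P *v w))"
    have s: "s > 0" unfolding s_def using posP[OF wnz] by simp
    define e where "e = (1 / s) *\<^sub>R w"
    have ee: "e \<bullet> (P *v e) = 1"
      unfolding e_def using s posP[OF wnz]
      by (simp add: matrix_vector_mult_scaleR s_def power2_eq_square[symmetric])
    have ec: "e \<bullet> (P *v c) = 0" if "c \<in> C" for c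
      unfolding e_def using wc[OF that] by simp
    have ce: "c \<bullet> (P *v e) = 0" if "c \<in> C" for c
      using ec[OF that] symip[OF symP, of c e] by simp
    have eC: "e \<notin> C" using ec ee by force
    have bspan: "b \<in> span (insert e C)"
    proof -
      have "b = s *\<^sub>R e + (\<Sum>c\<in>C. (b \<bullet> (P *v c)) *\<^sub>R c)"
        unfolding e_def w_def using s by simp
      also have "\<dots> \<in> span (insert e C)"
        by (intro span_add span_scale span_sum span_base) auto
      finally show ?thesis .
    qed
    show ?thesis
    proof (intro exI[of _ "insert e C"] conjI)
      show "finite (insert e C)" using C(1) by simp
      show "ONP P (insert e C)"
        using C(2) ee ec ce eC unfolding ONP_def by auto
      show "C0 \<subseteq> insert e C" using C(3) by auto
      show "C0 \<union> insert b B \<subseteq> span (insert e C)"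
        using C(4) bspan span_mono[of C "insert e C"] by auto
    qed
  qed
qed

lemma tPA_entry:
  fixes A P :: "real^'n::finite^'n"
  shows "(transpose A ** P ** A) $ j $ k = (\<chi> i. A$i$j) \<bullet> (P *v (\<chi> i. A$i$k))"
  apply (simp add: matrix_matrix_mult_def matrix_vector_mult_def inner_vec_def transpose_def
      sum_distrib_left sum_distrib_right mult_ac)
  apply (subst sum.swap)
  apply (simp add: mult_ac)
  done

lemma exists_A:
  fixes P :: "real^'n::finite^'n" and e1 :: "real^'n" and jz :: 'n
  assumes symP: "transpose P = P" and posP: "\<And>x. x \<noteq> 0 \<Longrightarrow> x \<bullet> (P *v x) > 0"
    and e1: "e1 \<bullet> (P *v e1) = 1"
  shows "\<exists>A. transpose A ** P ** A = mat 1 \<and> (\<forall>i. A$i$jz = e1$i)"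
proof -
  have on0: "ONP P {e1}" using e1 unfolding ONP_def by auto
  obtain C where C: "finite C" "ONP P C" "{e1} \<subseteq> C" "{e1} \<union> Basis \<subseteq> span C"
    using gs[OF symP posP finite_Basis, of "{e1}"] on0 by auto
  have "UNIV \<subseteq> span C"
  proof -
    have "span (Basis::(real^'n) set) \<subseteq> span C" using C(4) by (intro span_minimal) (auto simp: subspace_span)
    then show ?thesis by simp
  qed
  then have "dim (UNIV::(real^'n) set) \<le> card C" using C(1) by (intro span_card_ge_dim) auto
  then have cardC: "CARD('n) \<le> card C" by simp
  have "card (UNIV - {jz}) \<le> card (C - {e1})"
    using cardC C(1,3) by (simp add: card_Diff_singleton)
  then obtain f where f: "f ` (UNIV - {jz}) \<subseteq> C - {e1}" "inj_on f (UNIV - {jz})"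
    using card_le_inj[of "UNIV - {jz}" "C - {e1}"] C(1) by auto
  define g where "g i = (if i = jz then e1 else f i)" for i
  have gC: "g i \<in> C" for i using f(1) C(3) unfolding g_def by auto
  have ginj: "g i = g k \<longleftrightarrow> i = k" for i k
    using f unfolding g_def inj_on_def by auto
  define A where "A = (\<chi> i j. g j $ i)"
  have col: "(\<chi> i. A$i$j) = g j" for j unfolding A_def by (simp add: vec_eq_iff)
  show ?thesis
  proof (intro exI[of _ A] conjI allI)
    show "transpose A ** P ** A = mat 1"
      unfolding vec_eq_iff tPA_entry col
      using C(2) gC ginj unfolding ONP_def by (auto simp: mat_def)
    show "A$i$jz = e1$i" for i unfolding A_def g_def by simp
  qed
qed

(* ---- part 6 ---- *)
lemma inner_mat_transpose:
  fixes A :: "real^'n::finite^'m::finite"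
  shows "v \<bullet> (A *v y) = (transpose A *v v) \<bullet> y"
  by (simp add: dot_lmul_matrix)

locale gset =
  fixes S :: "real^'d::finite^'d" and rstar :: "real^'d"
  assumes symm: "transpose S = S"
    and posdef: "\<forall>x. x \<noteq> 0 \<longrightarrow> x \<bullet> (S *v x) > 0"
    and rnz: "rstar \<noteq> 0"
begin

definition P where "P = matrix_inv S"

lemma invS: "invertible S"
proof -
  have "inj ((*v) S)"
  proof (rule injI)
    fix x y assume "S *v x = S *v y"
    then have "S *v (x - y) = 0" by (simp add: matrix_vector_mult_diff_distrib)
    then have "(x - y) \<bullet> (S *v (x - y)) = 0" by simp
    then show "x = y" using posdef by (metis less_irrefl right_minus_eq)
  qed
  then show ?thesis unfolding invertible_left_inverse matrix_left_invertible_injective[symmetric] .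
qed

lemma PS: "P ** S = mat 1" "S ** P = mat 1"
  using matrix_inv_both[OF invS] unfolding P_def by auto

lemma symP: "transpose P = P"
proof -
  have "S ** transpose P = mat 1"
    using arg_cong[OF PS(1), of transpose] symm by (simp add: matrix_transpose_mul transpose_mat)
  then have "P ** (S ** transpose P) = P" by simp
  then show ?thesis by (simp add: matrix_mul_assoc PS)
qed

lemma SPx: "S *v (P *v x) = x" "P *v (S *v x) = x"
  by (simp_all add: matrix_vector_mul_assoc PS)

lemma posP: "x \<noteq> 0 \<Longrightarrow> x \<bullet> (P *v x) > 0"
proof -
  assume x: "x \<noteq> 0"
  have "P *v x \<noteq> 0" using SPx(1)[of x] x by auto
  then have "(P *v x) \<bullet> (S *v (P *v x)) > 0" using posdef by blast
  then show ?thesis by (simp add: SPx inner_commute)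
qed

definition sst where "sst = rstar \<bullet> (S *v rstar)"

lemma sst_pos: "sst > 0" unfolding sst_def using posdef rnz by blast

definition e1 where "e1 = (1 / sqrt sst) *\<^sub>R (S *v rstar)"

lemma e1: "e1 \<bullet> (P *v e1) = 1"
  using sst_pos unfolding e1_def
  by (simp add: matrix_vector_mult_scaleR SPx inner_commute sst_def[symmetric] power2_eq_square[symmetric])

lemma symS_ip: "x \<bullet> (S *v y) = y \<bullet> (S *v x)"
  using symip[OF symm] .

lemma cs: "(r \<bullet> (S *v rstar))^2 \<le> (r \<bullet> (S *v r)) * sst"
proof -
  have "0 \<le> (r - t *\<^sub>R rstar) \<bullet> (S *v (r - t *\<^sub>R rstar))" for t
    using posdef by (cases "r - t *\<^sub>R rstar = 0") (auto intro: less_imp_le)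
  then have q: "0 \<le> r \<bullet> (S *v r) - 2 * t * (r \<bullet> (S *v rstar)) + t^2 * sst" for t
    using symS_ip[of rstar r]
    by (simp add: matrix_vector_mult_diff_distrib matrix_vector_mult_scaleR inner_diff_left inner_diff_right
        algebra_simps sst_def power2_eq_square)
  define t where "t = (r \<bullet> (S *v rstar)) / sst"
  have "0 \<le> r \<bullet> (S *v r) - 2 * t * (r \<bullet> (S *v rstar)) + t^2 * sst" by (rule q)
  then have "0 \<le> r \<bullet> (S *v r) - (r \<bullet> (S *v rstar))^2 / sst"
    using sst_pos unfolding t_def by (simp add: power2_eq_square field_simps)
  then show ?thesis using sst_pos by (simp add: field_simps)
qed

end

locale gsetA = gset S rstar for S :: "real^'d::finite^'d" and rstar +
  fixes A :: "real^'d^'d" and jz :: 'd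
  assumes tPA: "transpose A ** P ** A = mat 1"
    and colA: "\<forall>i. A$i$jz = e1$i"
begin

lemma AAt: "A ** transpose A = S"
proof -
  have "A ** (transpose A ** P) = mat 1"
    using tPA matrix_left_right_inverse[of "transpose A ** P" A] by simp
  then have "(A ** transpose A) ** P = mat 1" by (simp add: matrix_mul_assoc)
  then have "(A ** transpose A) ** P ** S = S" by simp
  then show ?thesis by (simp add: matrix_mul_assoc[symmetric] PS)
qed

lemma detS: "det S = (det A)^2"
  using AAt by (metis det_mul det_transpose power2_eq_square)

lemma detA_nz: "det A \<noteq> 0"
  using detS invS invertible_det_nz by fastforce

lemma invA: "invertible A" using detA_nz invertible_det_nz by blast

lemma S_eq: "S *v r = A *v (transpose A *v r)"
  by (metis AAt matrix_vector_mul_assoc)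

lemma bilS: "v \<bullet> (S *v w) = (transpose A *v v) \<bullet> (transpose A *v w)"
  unfolding S_eq inner_mat_transpose[of v A] ..

lemma e1_col: "A *v axis jz 1 = e1"
  using colA by (simp add: matrix_vector_mult_basis column_def vec_eq_iff)

lemma Srstar: "S *v rstar = sqrt sst *\<^sub>R e1"
  using sst_pos unfolding e1_def by simp

lemma Atr: "transpose A *v rstar = sqrt sst *\<^sub>R axis jz 1"
proof -
  have "transpose A *v rstar = transpose A *v (P *v (S *v rstar))" by (simp add: SPx)
  also have "\<dots> = sqrt sst *\<^sub>R ((transpose A ** P ** A) *v axis jz 1)"
    by (simp add: Srstar e1_col[symmetric] matrix_vector_mult_scaleR matrix_vector_mul_assoc matrix_mul_assoc)
  also have "\<dots> = sqrt sst *\<^sub>R axis jz 1" by (simp add: tPA)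
  finally show ?thesis .
qed

lemma Atr_comp: "(transpose A *v rstar) $ j = (if j = jz then sqrt sst else 0)"
  unfolding Atr by (simp add: axis_def)

lemma At_jz: "(transpose A *v r) $ jz = r \<bullet> e1"
proof -
  have "(transpose A *v r) $ jz = (transpose A *v r) \<bullet> axis jz 1" by (simp add: inner_axis)
  also have "\<dots> = r \<bullet> (A *v axis jz 1)" by (simp add: inner_mat_transpose)
  finally show ?thesis by (simp add: e1_col)
qed

lemma quadA: "(A *v y) \<bullet> (P *v (A *v y)) = y \<bullet> y"
proof -
  have "(A *v y) \<bullet> (P *v (A *v y)) = (P *v (A *v y)) \<bullet> (A *v y)" by (simp add: inner_commute)
  also have "\<dots> = (transpose A *v (P *v (A *v y))) \<bullet> y" by (rule inner_mat_transpose)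
  also have "\<dots> = y \<bullet> y" by (simp add: matrix_vector_mul_assoc matrix_mul_assoc tPA)
  finally show ?thesis .
qed

lemma pdfA: "gauss_pdf S (A *v y) * \<bar>det A\<bar> = phiv y"
proof -
  have yy: "y \<bullet> y = (\<Sum>i\<in>UNIV. (y$i)^2)" by (simp add: inner_vec_def power2_eq_square)
  have "phiv y = (1 / sqrt (2 * pi)) ^ CARD('d) * exp (- (y \<bullet> y) / 2)"
    unfolding phiv_def yy std_normal_density_def prod.distrib
    by (simp add: exp_sum[symmetric] sum_negf sum_divide_distrib)
  moreover have "sqrt ((2 * pi) ^ CARD('d) * det S) = sqrt (2 * pi) ^ CARD('d) * \<bar>det A\<bar>"
  proof -
    have "sqrt ((2 * pi) ^ CARD('d) * det S) = sqrt ((2 * pi) ^ CARD('d)) * sqrt (det S)"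
      by (rule real_sqrt_mult)
    also have "sqrt ((2 * pi) ^ CARD('d)) = sqrt (2 * pi) ^ CARD('d)" by (rule real_sqrt_power)
    also have "sqrt (det S) = \<bar>det A\<bar>" by (simp add: detS)
    finally show ?thesis .
  qed
  ultimately show ?thesis
    unfolding gauss_pdf_def P_def[symmetric] quadA using detA_nz
    by (simp add: field_simps power_one_over)
qed

definition Phi where "Phi = density lborel (\<lambda>y::real^'d. ennreal (phiv y))"

lemma Amb[measurable]: "(*v) A \<in> borel \<rightarrow>\<^sub>M borel"
  by (intro borel_measurable_continuous_onI linear_continuous_on matrix_vector_mul_bounded_linear)

lemma mvm_meas[measurable]: "(\<lambda>x. (M::real^'d^'d) *v x) \<in> borel_measurable borel"
  by (intro borel_measurable_continuous_onI linear_continuous_on matrix_vector_mul_bounded_linear)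

lemma gauss_pdf_meas[measurable]: "gauss_pdf S \<in> borel_measurable borel"
  unfolding gauss_pdf_def[abs_def] by measurable

lemma gaussA: "gauss S = distr Phi borel ((*v) A)"
proof (rule measure_eqI)
  show "sets (gauss S) = sets (distr Phi borel ((*v) A))" by (simp add: gauss_def)
next
  fix X assume "X \<in> sets (gauss S)"
  then have X[measurable]: "X \<in> sets borel" by (simp add: gauss_def)
  have pre[measurable]: "(*v) A -` X \<in> sets borel" using measurable_sets[OF Amb X] by simp
  have L: "lborel = density (distr lborel borel ((*v) A)) (\<lambda>_. ennreal \<bar>det A\<bar>)"
    by (rule lborel_linear[OF invA])
  have "emeasure (gauss S) X = (\<integral>\<^sup>+x. ennreal (gauss_pdf S x) * indicator X x \<partial>lborel)"
    unfolding gauss_def by (simp add: emeasure_density)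
  also have "\<dots> = (\<integral>\<^sup>+x. ennreal (gauss_pdf S x) * indicator X x \<partial>(density (distr lborel borel ((*v) A)) (\<lambda>_. ennreal \<bar>det A\<bar>)))"
    by (rule arg_cong[where f="\<lambda>M. nn_integral M (\<lambda>x. ennreal (gauss_pdf S x) * indicator X x)", OF L])
  also have "\<dots> = (\<integral>\<^sup>+y. ennreal \<bar>det A\<bar> * (ennreal (gauss_pdf S (A *v y)) * indicator X (A *v y)) \<partial>lborel)"
    by (simp add: nn_integral_density nn_integral_distr)
  also have "\<dots> = (\<integral>\<^sup>+y. ennreal (phiv y) * indicator ((*v) A -` X) y \<partial>lborel)"
  proof (intro nn_integral_cong)
    fix y
    have "ennreal \<bar>det A\<bar> * ennreal (gauss_pdf S (A *v y)) = ennreal (phiv y)"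
      by (subst ennreal_mult'[symmetric]) (simp_all add: pdfA[symmetric] mult.commute)
    then show "ennreal \<bar>det A\<bar> * (ennreal (gauss_pdf S (A *v y)) * indicator X (A *v y)) =
        ennreal (phiv y) * indicator ((*v) A -` X) y"
      by (simp add: mult.assoc[symmetric] split: split_indicator)
  qed
  also have "\<dots> = emeasure (distr Phi borel ((*v) A)) X"
    unfolding Phi_def by (simp add: emeasure_distr emeasure_density)
  finally show "emeasure (gauss S) X = emeasure (distr Phi borel ((*v) A)) X" .
qed

lemma integrable_gauss:
  assumes [measurable]: "f \<in> borel_measurable borel"
  shows "integrable (gauss S) f \<longleftrightarrow> integrable lborel (\<lambda>y. phiv y * f (A *v y))"
  unfolding gaussA Phi_def
  by (subst integrable_distr_eq) (auto simp: integrable_density phiv_nonneg)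

lemma integral_gauss:
  assumes [measurable]: "f \<in> borel_measurable borel"
  shows "(\<integral>x. f x \<partial>gauss S) = (\<integral>y. phiv y * f (A *v y) \<partial>lborel)"
  unfolding gaussA Phi_def
  by (subst integral_distr) (auto simp: integral_density phiv_nonneg)

end

(* ---- part 7 ---- *)
context gsetA
begin

definition Hset :: "real set \<Rightarrow> (real^'d) set" where
  "Hset H = {x. rstar \<bullet> x \<in> H}"

lemma rstar_A: "rstar \<bullet> (A *v y) = sqrt sst * y $ jz"
  by (simp add: inner_mat_transpose[of rstar A y] Atr inner_axis' del: transpose_matrix_vector)

lemma ind_Hset:
  assumes H: "H = {0<..} \<or> H = {..0}"
  shows "indicator (Hset H) (A *v y) = (indicator H (y $ jz) :: real)"
  using H sst_pos
  by (auto split: split_indicator simp: Hset_def rstar_A zero_less_mult_iff mult_le_0_iff)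

lemma Hset_meas[measurable]: "Hset H \<in> sets borel" if "H \<in> sets borel"
proof -
  have "Hset H = (\<lambda>x. rstar \<bullet> x) -` H \<inter> space borel" unfolding Hset_def by auto
  also have "\<dots> \<in> sets borel" using that by measurable
  finally show ?thesis .
qed

lemma emeasure_Hset:
  assumes H: "H = {0<..} \<or> H = {..0}"
  shows "emeasure (gauss S) (Hset H) = ennreal (1/2)"
proof -
  have Hb: "H \<in> sets borel" using H by auto
  have pre[measurable]: "(*v) A -` Hset H \<in> sets borel"
    using measurable_sets[OF Amb Hset_meas[OF Hb]] by simp
  have "emeasure (gauss S) (Hset H) = emeasure Phi ((*v) A -` Hset H)"
    unfolding gaussA using Hset_meas[OF Hb] by (subst emeasure_distr) (auto simp: Phi_def)
  also have "\<dots> = (\<integral>\<^sup>+y. ennreal (phiv y) * indicator ((*v) A -` Hset H) y \<partial>lborel)"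
    unfolding Phi_def by (simp add: emeasure_density mult.commute)
  also have "\<dots> = (\<integral>\<^sup>+y. ennreal (phiv y * indicator H (y $ jz)) \<partial>lborel)"
  proof (intro nn_integral_cong)
    fix y
    show "ennreal (phiv y) * indicator ((*v) A -` Hset H) y = ennreal (phiv y * indicator H (y $ jz))"
      using ind_Hset[OF H, of y]
      by (cases "A *v y \<in> Hset H"; cases "y $ jz \<in> H") (auto simp: indicator_def)
  qed
  also have "\<dots> = ennreal (\<integral>y. phiv y * indicator H (y $ jz) \<partial>lborel)"
    using mom0[OF H, of jz] by (intro nn_integral_eq_integral) (auto simp: phiv_nonneg)
  also have "\<dots> = ennreal (1/2)" by (simp only: mom0(2)[OF H, of jz])
  finally show ?thesis .
qed

lemma sets_gauss[simp, measurable_cong]: "sets (gauss S) = sets borel"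
  by (simp add: gauss_def)

lemma unif_Hset:
  assumes H: "H = {0<..} \<or> H = {..0}"
  shows "uniform_measure (gauss S) (Hset H) = density (gauss S) (\<lambda>x. ennreal (2 * indicator (Hset H) x))"
proof -
  have Hb: "H \<in> sets borel" using H by auto
  have [measurable]: "Hset H \<in> sets borel" using Hb by simp
  have d: "(1::ennreal) / ennreal (1/2) = ennreal 2" using divide_ennreal[of 1 "1/2"] by simp
  have "(\<lambda>x. indicator (Hset H) x / ennreal (1/2)) = (\<lambda>x. ennreal (2 * indicator (Hset H) x))"
    using d by (auto split: split_indicator)
  then show ?thesis unfolding uniform_measure_def emeasure_Hset[OF H] by simp
qed

lemma prob_Hset:
  assumes H: "H = {0<..} \<or> H = {..0}"
  shows "prob_space (uniform_measure (gauss S) (Hset H))"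
  by (rule prob_space_uniform_measure) (simp_all add: emeasure_Hset[OF H])

lemma cond_integrable:
  assumes H: "H = {0<..} \<or> H = {..0}" and [measurable]: "f \<in> borel_measurable borel"
  shows "integrable (uniform_measure (gauss S) (Hset H)) f \<longleftrightarrow>
     integrable lborel (\<lambda>y. phiv y * (2 * indicator H (y $ jz) * f (A *v y)))"
proof -
  have Hb: "H \<in> sets borel" using H by auto
  have "integrable (uniform_measure (gauss S) (Hset H)) f \<longleftrightarrow>
      integrable (gauss S) (\<lambda>x. 2 * indicator (Hset H) x * f x)"
    unfolding unif_Hset[OF H] using Hb
    by (subst integrable_density) (auto simp: gauss_def)
  also have "\<dots> \<longleftrightarrow> integrable lborel (\<lambda>y. phiv y * (2 * indicator H (y $ jz) * f (A *v y)))"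
    using Hb by (subst integrable_gauss) (auto simp: ind_Hset[OF H])
  finally show ?thesis .
qed

lemma cond_integral:
  assumes H: "H = {0<..} \<or> H = {..0}" and [measurable]: "f \<in> borel_measurable borel"
  shows "(\<integral>x. f x \<partial>uniform_measure (gauss S) (Hset H)) =
     (\<integral>y. phiv y * (2 * indicator H (y $ jz) * f (A *v y)) \<partial>lborel)"
proof -
  have Hb: "H \<in> sets borel" using H by auto
  have "(\<integral>x. f x \<partial>uniform_measure (gauss S) (Hset H)) =
      (\<integral>x. 2 * indicator (Hset H) x * f x \<partial>gauss S)"
    unfolding unif_Hset[OF H] using Hb
    by (subst integral_density) (auto simp: gauss_def)
  also have "\<dots> = (\<integral>y. phiv y * (2 * indicator H (y $ jz) * f (A *v y)) \<partial>lborel)"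
    using Hb by (subst integral_gauss) (auto simp: ind_Hset[OF H])
  finally show ?thesis .
qed

lemma inner_A_sum: "v \<bullet> (A *v y) = (\<Sum>j\<in>UNIV. (transpose A *v v) $ j * y $ j)"
proof -
  have "v \<bullet> (A *v y) = (transpose A *v v) \<bullet> y" by (rule inner_mat_transpose)
  also have "\<dots> = (\<Sum>j\<in>UNIV. (transpose A *v v) $ j * y $ j)" by (simp only: inner_vec_def inner_real_def)
  finally show ?thesis .
qed

lemma lin_meas[measurable]: "(\<lambda>x::real^'d. v \<bullet> x) \<in> borel_measurable borel"
  by measurable

lemma cond_mom2:
  assumes H: "H = {0<..} \<or> H = {..0}"
  shows "integrable (uniform_measure (gauss S) (Hset H)) (\<lambda>x. (v \<bullet> x) * (w \<bullet> x))"
    and "(\<integral>x. (v \<bullet> x) * (w \<bullet> x) \<partial>uniform_measure (gauss S) (Hset H)) = v \<bullet> (S *v w)"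
proof -
  define a where "a = transpose A *v v"
  define b where "b = transpose A *v w"
  have pt: "phiv y * (2 * indicator H (y $ jz) * ((v \<bullet> (A *v y)) * (w \<bullet> (A *v y)))) =
     (\<Sum>j\<in>UNIV. \<Sum>k\<in>UNIV. (2 * a$j * b$k) * (phiv y * (y$j * y$k) * indicator H (y$jz)))" for y
    unfolding inner_A_sum[of v] inner_A_sum[of w] a_def[symmetric] b_def[symmetric]
    apply (simp add: sum_product sum_distrib_left mult_ac)
    apply (subst sum.swap)
    apply (simp add: mult_ac)
    done
  have int: "integrable lborel (\<lambda>y. \<Sum>j\<in>UNIV. \<Sum>k\<in>UNIV. (2 * a$j * b$k) * (phiv y * (y$j * y$k) * indicator H (y$jz)))"
    using mom2(1)[OF H, where jz=jz] by (intro Bochner_Integration.integrable_sum Bochner_Integration.integrable_mult_right) auto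
  show "integrable (uniform_measure (gauss S) (Hset H)) (\<lambda>x. (v \<bullet> x) * (w \<bullet> x))"
    unfolding cond_integrable[OF H, of "\<lambda>x. (v \<bullet> x) * (w \<bullet> x)", simplified] pt using int .
  have "(\<integral>x. (v \<bullet> x) * (w \<bullet> x) \<partial>uniform_measure (gauss S) (Hset H)) =
      (\<integral>y. (\<Sum>j\<in>UNIV. \<Sum>k\<in>UNIV. (2 * a$j * b$k) * (phiv y * (y$j * y$k) * indicator H (y$jz))) \<partial>lborel)"
    unfolding cond_integral[OF H, of "\<lambda>x. (v \<bullet> x) * (w \<bullet> x)", simplified] pt ..
  also have "\<dots> = (\<Sum>j\<in>UNIV. \<Sum>k\<in>UNIV. (2 * a$j * b$k) * (if j = k then 1/2 else 0))"
    using mom2[OF H, where jz=jz] by (simp add: Bochner_Integration.integral_sum Bochner_Integration.integrable_sum)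
  also have "\<dots> = a \<bullet> b"
    by (simp add: inner_vec_def if_distrib sum.delta cong: if_cong)
  also have "\<dots> = v \<bullet> (S *v w)" unfolding a_def b_def bilS ..
  finally show "(\<integral>x. (v \<bullet> x) * (w \<bullet> x) \<partial>uniform_measure (gauss S) (Hset H)) = v \<bullet> (S *v w)" .
qed

lemma cond_mom1:
  assumes H: "H = {0<..} \<or> H = {..0}"
  shows "integrable (uniform_measure (gauss S) (Hset H)) (\<lambda>x. v \<bullet> x)"
    and "(\<integral>x. v \<bullet> x \<partial>uniform_measure (gauss S) (Hset H)) =
           hsgn H * sqrt (2 / pi) * (v \<bullet> (S *v rstar)) / sqrt sst"
proof -
  define a where "a = transpose A *v v"
  have pt: "phiv y * (2 * indicator H (y $ jz) * (v \<bullet> (A *v y))) =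
     (\<Sum>j\<in>UNIV. (2 * a$j) * (phiv y * y$j * indicator H (y$jz)))" for y
    unfolding inner_A_sum[of v] a_def[symmetric]
    by (simp add: sum_distrib_left mult_ac)
  have int: "integrable lborel (\<lambda>y. \<Sum>j\<in>UNIV. (2 * a$j) * (phiv y * y$j * indicator H (y$jz)))"
    using mom1(1)[OF H, where jz=jz] by (intro Bochner_Integration.integrable_sum Bochner_Integration.integrable_mult_right) auto
  show "integrable (uniform_measure (gauss S) (Hset H)) (\<lambda>x. v \<bullet> x)"
    unfolding cond_integrable[OF H, of "\<lambda>x. v \<bullet> x", simplified] pt using int .
  have "(\<integral>x. v \<bullet> x \<partial>uniform_measure (gauss S) (Hset H)) =
      (\<integral>y. (\<Sum>j\<in>UNIV. (2 * a$j) * (phiv y * y$j * indicator H (y$jz))) \<partial>lborel)"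
    unfolding cond_integral[OF H, of "\<lambda>x. v \<bullet> x", simplified] pt ..
  also have "\<dots> = (\<Sum>j\<in>UNIV. (2 * a$j) * (if j = jz then hsgn H / sqrt (2 * pi) else 0))"
    using mom1[OF H, where jz=jz] by (simp add: Bochner_Integration.integral_sum Bochner_Integration.integrable_sum)
  also have "\<dots> = 2 * a$jz * hsgn H / sqrt (2 * pi)"
    by (simp add: if_distrib sum.delta cong: if_cong)
  also have "a$jz = (v \<bullet> (S *v rstar)) / sqrt sst"
    unfolding a_def At_jz e1_def using sst_pos by (simp add: inner_commute)
  also have "2 * ((v \<bullet> (S *v rstar)) / sqrt sst) * hsgn H / sqrt (2 * pi) =
      hsgn H * sqrt (2 / pi) * (v \<bullet> (S *v rstar)) / sqrt sst"
  proof -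
    have "2 / sqrt (2 * pi) = sqrt (2 / pi)"
      by (simp add: real_sqrt_divide real_sqrt_mult field_simps)
    moreover have "2 * ((v \<bullet> (S *v rstar)) / sqrt sst) * hsgn H / sqrt (2 * pi) =
      hsgn H * (2 / sqrt (2 * pi)) * (v \<bullet> (S *v rstar)) / sqrt sst"
      by (simp add: mult_ac divide_inverse)
    ultimately show ?thesis by simp
  qed
  finally show "(\<integral>x. v \<bullet> x \<partial>uniform_measure (gauss S) (Hset H)) =
           hsgn H * sqrt (2 / pi) * (v \<bullet> (S *v rstar)) / sqrt sst" .
qed

end

(* ---- part 8 ---- *)
lemma ucm_pair:
  fixes N :: "'b measure" and A :: "'a set" and F :: "'a \<times> 'b \<Rightarrow> real"
  assumes A: "finite A" "A \<noteq> {}" and N: "sigma_finite_measure N"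
    and Fm[measurable]: "F \<in> borel_measurable (uniform_count_measure A \<Otimes>\<^sub>M N)"
    and Fi: "\<And>a. a \<in> A \<Longrightarrow> integrable N (\<lambda>y. F (a, y))"
  shows "integrable (uniform_count_measure A \<Otimes>\<^sub>M N) F"
    and "(\<integral>z. F z \<partial>(uniform_count_measure A \<Otimes>\<^sub>M N)) = (\<Sum>a\<in>A. \<integral>y. F (a, y) \<partial>N) / card A"
proof -
  interpret U: prob_space "uniform_count_measure A" using A by (rule prob_space_uniform_count_measure)
  interpret N: sigma_finite_measure N by (rule N)
  interpret pair_sigma_finite "uniform_count_measure A" N ..
  have "(\<integral>\<^sup>+z. ennreal (norm (F z)) \<partial>(uniform_count_measure A \<Otimes>\<^sub>M N)) =
      (\<integral>\<^sup>+x. (\<integral>\<^sup>+y. ennreal (norm (F (x, y))) \<partial>N) \<partial>uniform_count_measure A)"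
    by (rule N.nn_integral_fst[symmetric]) simp
  also have "\<dots> = (\<Sum>a\<in>A. ennreal (1 / card A) * (\<integral>\<^sup>+y. ennreal (norm (F (a, y))) \<partial>N))"
    unfolding uniform_count_measure_def using A(1) by (simp add: nn_integral_point_measure_finite)
  also have "\<dots> < \<infinity>"
    using Fi A(1) by (auto simp: integrable_iff_bounded less_top[symmetric] ennreal_mult_eq_top_iff)
  finally show int: "integrable (uniform_count_measure A \<Otimes>\<^sub>M N) F"
    unfolding integrable_iff_bounded by simp
  have "(\<integral>z. F z \<partial>(uniform_count_measure A \<Otimes>\<^sub>M N)) = (\<integral>x. (\<integral>y. F (x, y) \<partial>N) \<partial>uniform_count_measure A)"
    by (rule integral_fst'[OF int, symmetric])
  also have "\<dots> = (\<Sum>a\<in>A. \<integral>y. F (a, y) \<partial>N) / card A"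
    using A(1) by (rule integral_uniform_count_measure)
  finally show "(\<integral>z. F z \<partial>(uniform_count_measure A \<Otimes>\<^sub>M N)) = (\<Sum>a\<in>A. \<integral>y. F (a, y) \<partial>N) / card A" .
qed

locale bagset =
  fixes Mp Mn :: "(real^'d::finite) measure" and q k :: nat
  assumes Mp: "prob_space Mp" and Mn: "prob_space Mn"
    and sMp: "sets Mp = sets borel" and sMn: "sets Mn = sets borel"
begin

definition C where "C i = (if i < k then Mp else Mn)" for i :: nat

definition bag where "bag = PiM {..<q} C"

lemma probC: "prob_space (C i)" unfolding C_def using Mp Mn by auto

lemma setsC: "sets (C i) = sets borel" unfolding C_def using sMp sMn by auto

lemma prob_bag: "prob_space bag"
  unfolding bag_def by (intro prob_space_PiM probC)

lemma psf: "product_sigma_finite C"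
  unfolding product_sigma_finite_def
  using probC by (auto intro: prob_space_imp_sigma_finite)

lemma meas_C: "g \<in> borel_measurable borel \<Longrightarrow> g \<in> borel_measurable (C i)"
  using measurable_cong_sets[OF setsC refl] by auto

lemma comp1:
  fixes g :: "real^'d \<Rightarrow> real"
  assumes i: "i < q" and gi: "integrable (C i) g"
  shows "integrable bag (\<lambda>b. g (b i))" and "(\<integral>b. g (b i) \<partial>bag) = (\<integral>x. g x \<partial>C i)"
proof -
  interpret product_sigma_finite C by (rule psf)
  define f where "f l = (if l = i then g else (\<lambda>_. 1))" for l
  have fi: "integrable (C l) (f l)" for l
    unfolding f_def using gi prob_space.finite_measure[OF probC] by (auto intro: finite_measure.integrable_const)
  have eq: "(\<Prod>l\<in>{..<q}. f l (b l)) = g (b i)" for b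
  proof -
    have "(\<Prod>l\<in>{..<q}. f l (b l)) = f i (b i) * (\<Prod>l\<in>{..<q} - {i}. f l (b l))"
      using i by (simp add: prod.remove)
    also have "(\<Prod>l\<in>{..<q} - {i}. f l (b l)) = 1"
      unfolding f_def by (intro prod.neutral) auto
    finally show ?thesis unfolding f_def by simp
  qed
  have "integrable (Pi\<^sub>M {..<q} C) (\<lambda>b. \<Prod>l\<in>{..<q}. f l (b l))"
    by (rule product_integrable_prod) (auto intro: fi)
  then show "integrable bag (\<lambda>b. g (b i))" unfolding bag_def eq .
  have "(\<integral>b. (\<Prod>l\<in>{..<q}. f l (b l)) \<partial>Pi\<^sub>M {..<q} C) = (\<Prod>l\<in>{..<q}. \<integral>x. f l x \<partial>C l)"
    by (rule product_integral_prod) (auto intro: fi)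
  also have "\<dots> = (\<integral>x. g x \<partial>C i)"
  proof -
    have "(\<Prod>l\<in>{..<q}. \<integral>x. f l x \<partial>C l) = (\<integral>x. f i x \<partial>C i) * (\<Prod>l\<in>{..<q} - {i}. \<integral>x. f l x \<partial>C l)"
      using i by (simp add: prod.remove)
    also have "(\<Prod>l\<in>{..<q} - {i}. \<integral>x. f l x \<partial>C l) = 1"
      unfolding f_def by (intro prod.neutral) (auto simp: prob_space.prob_space[OF probC])
    finally show ?thesis unfolding f_def by simp
  qed
  finally show "(\<integral>b. g (b i) \<partial>bag) = (\<integral>x. g x \<partial>C i)" unfolding bag_def eq .
qed

lemma comp2:
  fixes g h :: "real^'d \<Rightarrow> real"
  assumes i: "i < q" and j: "j < q" and ij: "i \<noteq> j"
    and gi: "integrable (C i) g" and hj: "integrable (C j) h"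
  shows "integrable bag (\<lambda>b. g (b i) * h (b j))"
    and "(\<integral>b. g (b i) * h (b j) \<partial>bag) = (\<integral>x. g x \<partial>C i) * (\<integral>x. h x \<partial>C j)"
proof -
  interpret product_sigma_finite C by (rule psf)
  define f where "f l = (if l = i then g else if l = j then h else (\<lambda>_. 1))" for l
  have fi: "integrable (C l) (f l)" for l
    unfolding f_def using gi hj prob_space.finite_measure[OF probC] by (auto intro: finite_measure.integrable_const)
  have eq: "(\<Prod>l\<in>{..<q}. f l (b l)) = g (b i) * h (b j)" for b
  proof -
    have "(\<Prod>l\<in>{..<q}. f l (b l)) = f i (b i) * (\<Prod>l\<in>{..<q} - {i}. f l (b l))"
      using i by (simp add: prod.remove)
    also have "(\<Prod>l\<in>{..<q} - {i}. f l (b l)) = f j (b j) * (\<Prod>l\<in>{..<q} - {i} - {j}. f l (b l))"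
      using j ij by (subst prod.remove[of _ j]) auto
    also have "(\<Prod>l\<in>{..<q} - {i} - {j}. f l (b l)) = 1"
      unfolding f_def by (intro prod.neutral) auto
    finally show ?thesis using ij unfolding f_def by simp
  qed
  have "integrable (Pi\<^sub>M {..<q} C) (\<lambda>b. \<Prod>l\<in>{..<q}. f l (b l))"
    by (rule product_integrable_prod) (auto intro: fi)
  then show "integrable bag (\<lambda>b. g (b i) * h (b j))" unfolding bag_def eq .
  have "(\<integral>b. (\<Prod>l\<in>{..<q}. f l (b l)) \<partial>Pi\<^sub>M {..<q} C) = (\<Prod>l\<in>{..<q}. \<integral>x. f l x \<partial>C l)"
    by (rule product_integral_prod) (auto intro: fi)
  also have "\<dots> = (\<integral>x. g x \<partial>C i) * (\<integral>x. h x \<partial>C j)"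
  proof -
    have "(\<Prod>l\<in>{..<q}. \<integral>x. f l x \<partial>C l) = (\<integral>x. f i x \<partial>C i) * (\<Prod>l\<in>{..<q} - {i}. \<integral>x. f l x \<partial>C l)"
      using i by (simp add: prod.remove)
    also have "(\<Prod>l\<in>{..<q} - {i}. \<integral>x. f l x \<partial>C l) = (\<integral>x. f j x \<partial>C j) * (\<Prod>l\<in>{..<q} - {i} - {j}. \<integral>x. f l x \<partial>C l)"
      using j ij by (subst prod.remove[of _ j]) auto
    also have "(\<Prod>l\<in>{..<q} - {i} - {j}. \<integral>x. f l x \<partial>C l) = 1"
      unfolding f_def by (intro prod.neutral) (auto simp: prob_space.prob_space[OF probC])
    finally show ?thesis using ij unfolding f_def by simp
  qed
  finally show "(\<integral>b. g (b i) * h (b j) \<partial>bag) = (\<integral>x. g x \<partial>C i) * (\<integral>x. h x \<partial>C j)"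
    unfolding bag_def eq .
qed

end

(* ---- part 9 ---- *)
lemma sum_sg: "k \<le> q \<Longrightarrow> (\<Sum>l<q. (if l < k then 1 else -1::real)) = 2 * real k - real q"
proof (induction q rule: dec_induct)
  case base
  then show ?case by simp
next
  case (step n)
  then show ?case by simp
qed

locale bagmom = bagset Mp Mn q k for Mp Mn :: "(real^'d::finite) measure" and q k +
  fixes S :: "real^'d^'d" and m :: "real^'d"
  assumes m2p: "\<And>v w. integrable Mp (\<lambda>x. (v \<bullet> x) * (w \<bullet> x)) \<and> (\<integral>x. (v \<bullet> x) * (w \<bullet> x) \<partial>Mp) = v \<bullet> (S *v w)"
    and m2n: "\<And>v w. integrable Mn (\<lambda>x. (v \<bullet> x) * (w \<bullet> x)) \<and> (\<integral>x. (v \<bullet> x) * (w \<bullet> x) \<partial>Mn) = v \<bullet> (S *v w)"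
    and m1p: "\<And>v. integrable Mp (\<lambda>x. v \<bullet> x) \<and> (\<integral>x. v \<bullet> x \<partial>Mp) = v \<bullet> m"
    and m1n: "\<And>v. integrable Mn (\<lambda>x. v \<bullet> x) \<and> (\<integral>x. v \<bullet> x \<partial>Mn) = - (v \<bullet> m)"
    and k1: "1 \<le> k" and kq: "k < q"
begin

definition sg where "sg l = (if l < k then 1 else -1::real)" for l :: nat

lemma sum_sg_q: "(\<Sum>l<q. sg l) = 2 * real k - real q"
  unfolding sg_def using sum_sg[of k q] kq by simp

lemma ax: "x $ a = axis a 1 \<bullet> x" for x :: "real^'d"
  by (simp add: cart_eq_inner_axis inner_commute)

lemma axS: "axis a 1 \<bullet> (S *v axis c 1) = S $ a $ c"
  by (simp add: matrix_vector_mult_basis column_def inner_axis')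

lemma C_m1: "integrable (C l) (\<lambda>x. x $ a)" "(\<integral>x. x $ a \<partial>C l) = sg l * m $ a"
  using m1p[of "axis a 1"] m1n[of "axis a 1"] unfolding C_def sg_def ax[symmetric]
  by (auto simp: ax[of m, symmetric])

lemma C_m2: "integrable (C l) (\<lambda>x. x $ a * x $ c)" "(\<integral>x. x $ a * x $ c \<partial>C l) = S $ a $ c"
  using m2p[of "axis a 1" "axis c 1"] m2n[of "axis a 1" "axis c 1"] unfolding C_def ax[symmetric] axS
  by (auto simp: matrix_vector_mult_basis column_def)

lemma C_aff:
  shows "integrable (C l) (\<lambda>x. (x $ a - \<alpha>) * (x $ c - \<beta>))"
    and "(\<integral>x. (x $ a - \<alpha>) * (x $ c - \<beta>) \<partial>C l) = S $ a $ c - \<alpha> * sg l * m $ c - \<beta> * sg l * m $ a + \<alpha> * \<beta>"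
proof -
  interpret prob_space "C l" by (rule probC)
  have e: "(\<lambda>x. (x $ a - \<alpha>) * (x $ c - \<beta>)) = (\<lambda>x. x $ a * x $ c - \<alpha> * x $ c - \<beta> * x $ a + \<alpha> * \<beta>)"
    by (auto simp: algebra_simps)
  show "integrable (C l) (\<lambda>x. (x $ a - \<alpha>) * (x $ c - \<beta>))"
    unfolding e using C_m1 C_m2 by auto
  show "(\<integral>x. (x $ a - \<alpha>) * (x $ c - \<beta>) \<partial>C l) = S $ a $ c - \<alpha> * sg l * m $ c - \<beta> * sg l * m $ a + \<alpha> * \<beta>"
    unfolding e using C_m1 C_m2 by (simp add: Bochner_Integration.integral_add Bochner_Integration.integral_diff prob_space)
qed

lemma sum_lin: "(\<Sum>l<q. X + sg l * Y) = real q * X + (2 * real k - real q) * Y"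
  by (simp add: sum.distrib sum_distrib_right[symmetric] sum_sg_q)

lemma q_pos: "q > 0" using kq by simp

lemma pm_meas:
  assumes [measurable]: "g \<in> borel_measurable borel"
  shows "(\<lambda>z. g (snd z (fst z))) \<in> borel_measurable (uniform_count_measure {..<q} \<Otimes>\<^sub>M bag)"
proof -
  have "sets (uniform_count_measure {..<q} \<Otimes>\<^sub>M bag) = sets (count_space {..<q} \<Otimes>\<^sub>M bag)"
    by (rule sets_pair_measure_cong) (simp_all add: sets_uniform_count_measure_count_space)
  moreover have "(\<lambda>z. g (snd z (fst z))) \<in> borel_measurable (count_space {..<q} \<Otimes>\<^sub>M bag)"
  proof (rule measurable_pair_measure_countable1)
    fix i assume i: "i \<in> {..<q}"
    have "(\<lambda>b. b i) \<in> bag \<rightarrow>\<^sub>M C i"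
      unfolding bag_def using i by (rule measurable_component_singleton)
    moreover have "g \<in> borel_measurable (C i)" by (rule meas_C) simp
    ultimately show "(\<lambda>y. g (snd (i, y) (fst (i, y)))) \<in> borel_measurable bag"
      by (simp add: measurable_compose[of _ bag "C i"])
  qed simp
  ultimately show ?thesis using measurable_cong_sets by blast
qed

lemma pm:
  assumes gm[measurable]: "g \<in> borel_measurable borel" and gi: "\<And>l. integrable (C l) g"
  shows "integrable (uniform_count_measure {..<q} \<Otimes>\<^sub>M bag) (\<lambda>z. g (snd z (fst z)))"
    and "(\<integral>z. g (snd z (fst z)) \<partial>(uniform_count_measure {..<q} \<Otimes>\<^sub>M bag)) = (\<Sum>l<q. \<integral>x. g x \<partial>C l) / q"
proof -
  have sf: "sigma_finite_measure bag"
    using prob_bag by (rule prob_space_imp_sigma_finite)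
  note u = ucm_pair[of "{..<q}" bag "\<lambda>z. g (snd z (fst z))", OF _ _ sf pm_meas[OF gm]]
  have fi: "integrable bag (\<lambda>y. g (y a))" if "a \<in> {..<q}" for a
    using comp1(1)[OF _ gi] that by simp
  show "integrable (uniform_count_measure {..<q} \<Otimes>\<^sub>M bag) (\<lambda>z. g (snd z (fst z)))"
    using u(1) fi q_pos by auto
  have "(\<integral>z. g (snd z (fst z)) \<partial>(uniform_count_measure {..<q} \<Otimes>\<^sub>M bag)) = (\<Sum>a<q. \<integral>y. g (y a) \<partial>bag) / card {..<q}"
    using u(2) fi q_pos by auto
  also have "\<dots> = (\<Sum>l<q. \<integral>x. g x \<partial>C l) / q"
    using comp1(2)[OF _ gi] by simp
  finally show "(\<integral>z. g (snd z (fst z)) \<partial>(uniform_count_measure {..<q} \<Otimes>\<^sub>M bag)) = (\<Sum>l<q. \<integral>x. g x \<partial>C l) / q" .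
qed

definition cc where "cc = (2 * real k - real q) / real q"

lemma SB_eq:
  assumes "bag_measure D f q k = bag"
  shows "Sigma_B D f q k = (\<chi> a c. S $ a $ c - cc^2 * m $ a * m $ c)"
proof -
  let ?M = "uniform_count_measure {..<q} \<Otimes>\<^sub>M bag"
  have mu: "(\<integral>z. (snd z (fst z)) $ a \<partial>?M) = cc * m $ a" for a
  proof -
    have "(\<integral>z. (snd z (fst z)) $ a \<partial>?M) = (\<Sum>l<q. \<integral>x. x $ a \<partial>C l) / q"
      using pm[of "\<lambda>x. x $ a"] C_m1 by simp
    also have "\<dots> = (\<Sum>l<q. 0 + sg l * m $ a) / q" using C_m1 by simp
    also have "\<dots> = cc * m $ a" unfolding sum_lin cc_def by simp
    finally show ?thesis .
  qed
  have ent: "(\<integral>z. ((snd z (fst z)) $ a - cc * m $ a) * ((snd z (fst z)) $ c - cc * m $ c) \<partial>?M) =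
      S $ a $ c - cc^2 * m $ a * m $ c" for a c
  proof -
    have "(\<integral>z. ((snd z (fst z)) $ a - cc * m $ a) * ((snd z (fst z)) $ c - cc * m $ c) \<partial>?M) =
        (\<Sum>l<q. \<integral>x. (x $ a - cc * m $ a) * (x $ c - cc * m $ c) \<partial>C l) / q"
      using pm[of "\<lambda>x. (x $ a - cc * m $ a) * (x $ c - cc * m $ c)"] C_aff by simp
    also have "\<dots> = (\<Sum>l<q. (S $ a $ c + cc * m $ a * (cc * m $ c)) + sg l * (- (cc * m $ a * m $ c) - cc * m $ c * m $ a)) / q"
      unfolding C_aff(2) by (intro arg_cong[where f="\<lambda>x. x / real q"] sum.cong refl) (simp add: algebra_simps)
    also have "\<dots> = S $ a $ c - cc^2 * m $ a * m $ c"
      unfolding sum_lin using q_pos by (simp add: cc_def field_simps power2_eq_square)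
    finally show ?thesis .
  qed
  show ?thesis
    unfolding Sigma_B_def point_measure'_def assms Let_def
    by (simp add: case_prod_beta mu ent vec_eq_iff)
qed

definition Pairs where "Pairs = {(i, j). i < q \<and> j < q \<and> i \<noteq> j}"

lemma Pairs_fin: "finite Pairs"
  unfolding Pairs_def by (rule finite_subset[of _ "{..<q} \<times> {..<q}"]) auto

lemma sq_split: "{..<q} \<times> {..<q} = Pairs \<union> (\<lambda>i. (i, i)) ` {..<q}"
  unfolding Pairs_def by auto

lemma sum_sq_split:
  "(\<Sum>z\<in>{..<q} \<times> {..<q}. F z) = (\<Sum>z\<in>Pairs. F z) + (\<Sum>i<q. F (i, i))" for F :: "nat \<times> nat \<Rightarrow> real"
proof -
  have "(\<Sum>z\<in>{..<q} \<times> {..<q}. F z) = (\<Sum>z\<in>Pairs. F z) + (\<Sum>z\<in>(\<lambda>i. (i, i)) ` {..<q}. F z)"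
    unfolding sq_split by (rule sum.union_disjoint) (use Pairs_fin in \<open>auto simp: Pairs_def\<close>)
  also have "(\<Sum>z\<in>(\<lambda>i. (i, i)) ` {..<q}. F z) = (\<Sum>i<q. F (i, i))"
    by (subst sum.reindex) (auto simp: inj_on_def)
  finally show ?thesis .
qed

lemma card_Pairs: "real (card Pairs) = real q * (real q - 1)"
proof -
  have "real (card ({..<q} \<times> {..<q})) = (\<Sum>z\<in>{..<q} \<times> {..<q}. 1::real)" by simp
  also have "\<dots> = real (card Pairs) + real q" unfolding sum_sq_split by simp
  finally show ?thesis by (simp add: card_cartesian_product algebra_simps)
qed

lemma sum_Pairs_sg: "(\<Sum>z\<in>Pairs. sg (fst z) * sg (snd z)) = (2 * real k - real q)^2 - real q"
proof -
  have "(\<Sum>z\<in>{..<q} \<times> {..<q}. sg (fst z) * sg (snd z)) = (\<Sum>i<q. sg i) * (\<Sum>j<q. sg j)"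
    by (simp add: sum_product sum.cartesian_product case_prod_beta)
  also have "\<dots> = (2 * real k - real q)^2" by (simp add: sum_sg_q power2_eq_square)
  finally have "(2 * real k - real q)^2 = (\<Sum>z\<in>Pairs. sg (fst z) * sg (snd z)) + (\<Sum>i<q. sg i * sg i)"
    unfolding sum_sq_split by simp
  moreover have "(\<Sum>i<q. sg i * sg i) = (\<Sum>i<q. 1)" by (rule sum.cong) (auto simp: sg_def)
  ultimately show ?thesis by simp
qed

lemma comp_meas[measurable]: "i < q \<Longrightarrow> (\<lambda>b. b i $ a) \<in> borel_measurable bag"
proof -
  assume i: "i < q"
  have "(\<lambda>b. b i) \<in> bag \<rightarrow>\<^sub>M C i"
    unfolding bag_def using i by (intro measurable_component_singleton) auto
  moreover have "(\<lambda>x. x $ a) \<in> borel_measurable (C i)" by (rule meas_C) simp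
  ultimately show ?thesis by (simp add: measurable_compose[of _ bag "C i"])
qed

lemma pair_int:
  assumes i: "i < q" and j: "j < q" and ij: "i \<noteq> j"
  shows "integrable bag (\<lambda>b. (b i $ a - b j $ a) * (b i $ c - b j $ c))"
    and "(\<integral>b. (b i $ a - b j $ a) * (b i $ c - b j $ c) \<partial>bag) = 2 * S $ a $ c - 2 * sg i * sg j * m $ a * m $ c"
proof -
  have e: "(\<lambda>b::nat \<Rightarrow> real^'d. (b i $ a - b j $ a) * (b i $ c - b j $ c)) =
    (\<lambda>b. b i $ a * b i $ c + b j $ a * b j $ c - b i $ a * b j $ c - b j $ a * b i $ c)"
    by (rule ext) (simp add: algebra_simps)
  note c1i = comp1[OF i C_m2(1)] and c1j = comp1[OF j C_m2(1)]
  note c2 = comp2[OF i j ij C_m1(1) C_m1(1)] and c2' = comp2[OF j i ij[symmetric] C_m1(1) C_m1(1)]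
  show "integrable bag (\<lambda>b. (b i $ a - b j $ a) * (b i $ c - b j $ c))"
    unfolding e using c1i c1j c2 c2' by auto
  show "(\<integral>b. (b i $ a - b j $ a) * (b i $ c - b j $ c) \<partial>bag) = 2 * S $ a $ c - 2 * sg i * sg j * m $ a * m $ c"
    unfolding e using c1i c1j c2 c2'
    by (simp add: Bochner_Integration.integral_add Bochner_Integration.integral_diff C_m1 C_m2 algebra_simps)
qed

definition dd where "dd = 2 * ((2 * real k - real q)^2 - real q) / (real q * (real q - 1))"

lemma pp_meas:
  "(\<lambda>z. (snd z (fst (fst z)) $ a - snd z (snd (fst z)) $ a) * (snd z (fst (fst z)) $ c - snd z (snd (fst z)) $ c))
     \<in> borel_measurable (uniform_count_measure Pairs \<Otimes>\<^sub>M bag)"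
proof -
  have "sets (uniform_count_measure Pairs \<Otimes>\<^sub>M bag) = sets (count_space Pairs \<Otimes>\<^sub>M bag)"
    by (rule sets_pair_measure_cong) (simp_all add: sets_uniform_count_measure_count_space)
  moreover have "(\<lambda>z. (snd z (fst (fst z)) $ a - snd z (snd (fst z)) $ a) * (snd z (fst (fst z)) $ c - snd z (snd (fst z)) $ c))
     \<in> borel_measurable (count_space Pairs \<Otimes>\<^sub>M bag)"
  proof (rule measurable_pair_measure_countable1)
    show "countable Pairs" using Pairs_fin by (rule countable_finite)
  next
    fix z assume "z \<in> Pairs"
    then obtain i j where z: "z = (i, j)" "i < q" "j < q" unfolding Pairs_def by auto
    show "(\<lambda>y. (snd (z, y) (fst (fst (z, y))) $ a - snd (z, y) (snd (fst (z, y))) $ a) *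
               (snd (z, y) (fst (fst (z, y))) $ c - snd (z, y) (snd (fst (z, y))) $ c)) \<in> borel_measurable bag"
      using z by simp
  qed
  ultimately show ?thesis using measurable_cong_sets by blast
qed

lemma SD_eq:
  assumes "bag_measure D f q k = bag" and q2: "q \<ge> 2"
  shows "Sigma_D D f q k = (\<chi> a c. 2 * S $ a $ c - dd * m $ a * m $ c)"
proof -
  have "(0, 1) \<in> Pairs" using q2 unfolding Pairs_def by auto
  then have Pne: "Pairs \<noteq> {}" by blast
  have sf: "sigma_finite_measure bag"
    using prob_bag by (rule prob_space_imp_sigma_finite)
  have ent: "(\<integral>z. (snd z (fst (fst z)) $ a - snd z (snd (fst z)) $ a) * (snd z (fst (fst z)) $ c - snd z (snd (fst z)) $ c)
      \<partial>(uniform_count_measure Pairs \<Otimes>\<^sub>M bag)) = 2 * S $ a $ c - dd * m $ a * m $ c" for a c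
  proof -
    note u = ucm_pair[OF Pairs_fin Pne sf pp_meas[of a c]]
    have fi: "integrable bag (\<lambda>y. (y (fst z) $ a - y (snd z) $ a) * (y (fst z) $ c - y (snd z) $ c))"
      if "z \<in> Pairs" for z
      using pair_int(1)[of "fst z" "snd z"] that unfolding Pairs_def by auto
    have "(\<integral>z. (snd z (fst (fst z)) $ a - snd z (snd (fst z)) $ a) * (snd z (fst (fst z)) $ c - snd z (snd (fst z)) $ c)
      \<partial>(uniform_count_measure Pairs \<Otimes>\<^sub>M bag)) =
      (\<Sum>z\<in>Pairs. \<integral>y. (y (fst z) $ a - y (snd z) $ a) * (y (fst z) $ c - y (snd z) $ c) \<partial>bag) / card Pairs"
      using u(2) fi by simp
    also have "\<dots> = (\<Sum>z\<in>Pairs. 2 * S $ a $ c - (2 * m $ a * m $ c) * (sg (fst z) * sg (snd z))) / card Pairs"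
    proof (intro arg_cong[where f="\<lambda>x. x / real (card Pairs)"] sum.cong refl)
      fix z assume "z \<in> Pairs"
      then obtain i j where z: "z = (i, j)" "i < q" "j < q" "i \<noteq> j" unfolding Pairs_def by auto
      show "(\<integral>y. (y (fst z) $ a - y (snd z) $ a) * (y (fst z) $ c - y (snd z) $ c) \<partial>bag) =
          2 * S $ a $ c - (2 * m $ a * m $ c) * (sg (fst z) * sg (snd z))"
        using pair_int(2)[OF z(2,3,4), of a c] z(1) by (simp add: algebra_simps)
    qed
    also have "\<dots> = (real (card Pairs) * (2 * S $ a $ c) - (2 * m $ a * m $ c) * ((2 * real k - real q)^2 - real q)) / card Pairs"
      by (simp add: sum_subtractf sum_distrib_left[symmetric] sum_Pairs_sg)
    also have "\<dots> = 2 * S $ a $ c - dd * m $ a * m $ c"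
      using q2 unfolding card_Pairs dd_def by (simp add: field_simps)
    finally show ?thesis .
  qed
  show ?thesis
    unfolding Sigma_D_def pair_point_measure_def assms(1) Let_def Pairs_def[symmetric]
    by (simp add: case_prod_beta ent vec_eq_iff)
qed

end

(* ---- part 10 ---- *)
lemma quad_rank1:
  fixes S :: "real^'d::finite^'d" and m r :: "real^'d"
  shows "quad (\<chi> a c. \<alpha> * S$a$c - \<beta> * m$a * m$c) r = \<alpha> * quad S r - \<beta> * (r \<bullet> m)^2"
proof -
  have e: "(\<chi> a c. \<alpha> * S$a$c - \<beta> * m$a * m$c) *v r = \<alpha> *\<^sub>R (S *v r) - (\<beta> * (m \<bullet> r)) *\<^sub>R m"
    by (simp add: vec_eq_iff matrix_vector_mult_def inner_vec_def sum_subtractf sum_distrib_left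
        algebra_simps)
  show ?thesis unfolding quad_def e
    by (simp add: inner_diff_right power2_eq_square inner_commute algebra_simps)
qed

context gsetA
begin

lemma Hp_eq: "{x. pos (rstar \<bullet> x) = 1} = Hset {0<..}"
  unfolding Hset_def pos_def by auto

lemma Hn_eq: "{x. pos (rstar \<bullet> x) = 0} = Hset {..0}"
  unfolding Hset_def pos_def by auto

definition mvec where "mvec = (sqrt (2 / pi) / sqrt sst) *\<^sub>R (S *v rstar)"

lemma hsgn_vals: "hsgn {0<..} = 1" "hsgn {..0} = -1"
proof -
  have "{..0::real} \<noteq> {0<..}" by (metis greaterThan_iff atMost_iff order_refl less_irrefl)
  then show "hsgn {0<..} = 1" "hsgn {..0} = -1" unfolding hsgn_def by auto
qed

lemma bagmom_inst:
  assumes "1 \<le> k" "k < q"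
  shows "bagmom (uniform_measure (gauss S) {x. pos (rstar \<bullet> x) = 1})
                (uniform_measure (gauss S) {x. pos (rstar \<bullet> x) = 0}) q k S mvec"
  unfolding Hp_eq Hn_eq
proof (intro bagmom.intro bagset.intro bagmom_axioms.intro)
  show "prob_space (uniform_measure (gauss S) (Hset {0<..}))" by (rule prob_Hset) simp
  show "prob_space (uniform_measure (gauss S) (Hset {..0}))" by (rule prob_Hset) simp
  show "sets (uniform_measure (gauss S) (Hset {0<..})) = sets borel" by simp
  show "sets (uniform_measure (gauss S) (Hset {..0})) = sets borel" by simp
  show "integrable (uniform_measure (gauss S) (Hset {0<..})) (\<lambda>x. (v \<bullet> x) * (w \<bullet> x)) \<and>
        (\<integral>x. (v \<bullet> x) * (w \<bullet> x) \<partial>uniform_measure (gauss S) (Hset {0<..})) = v \<bullet> (S *v w)" for v w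
    using cond_mom2[of "{0<..}" v w] by simp
  show "integrable (uniform_measure (gauss S) (Hset {..0})) (\<lambda>x. (v \<bullet> x) * (w \<bullet> x)) \<and>
        (\<integral>x. (v \<bullet> x) * (w \<bullet> x) \<partial>uniform_measure (gauss S) (Hset {..0})) = v \<bullet> (S *v w)" for v w
    using cond_mom2[of "{..0}" v w] by simp
  show "integrable (uniform_measure (gauss S) (Hset {0<..})) (\<lambda>x. v \<bullet> x) \<and>
        (\<integral>x. v \<bullet> x \<partial>uniform_measure (gauss S) (Hset {0<..})) = v \<bullet> mvec" for v
    using cond_mom1[of "{0<..}" v] by (simp add: hsgn_vals mvec_def)
  show "integrable (uniform_measure (gauss S) (Hset {..0})) (\<lambda>x. v \<bullet> x) \<and>
        (\<integral>x. v \<bullet> x \<partial>uniform_measure (gauss S) (Hset {..0})) = - (v \<bullet> mvec)" for v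
    using cond_mom1[of "{..0}" v] by (simp add: hsgn_vals mvec_def)
qed (use assms in auto)

lemma rm_sq: "(r \<bullet> mvec)^2 = (2 / pi) * (r \<bullet> (S *v rstar))^2 / sst"
  unfolding mvec_def using sst_pos by (simp add: power_mult_distrib power_divide)

lemma formulas:
  assumes q: "q \<ge> 2" and k1: "1 \<le> k" and k2: "k \<le> q - 1"
  shows "quad (Sigma_B (gauss S) (\<lambda>x. pos (rstar \<bullet> x)) q k) r =
           quad S r - ((2 * real k - real q) / real q)^2 * ((2 / pi) * (r \<bullet> (S *v rstar))^2 / sst)"
    and "quad (Sigma_D (gauss S) (\<lambda>x. pos (rstar \<bullet> x)) q k) r =
           2 * quad S r - (2 * ((2 * real k - real q)^2 - real q) / (real q * (real q - 1))) * ((2 / pi) * (r \<bullet> (S *v rstar))^2 / sst)"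
proof -
  have kq: "k < q" using q k2 by simp
  interpret B: bagmom "uniform_measure (gauss S) {x. pos (rstar \<bullet> x) = 1}"
                "uniform_measure (gauss S) {x. pos (rstar \<bullet> x) = 0}" q k S mvec
    using bagmom_inst[OF k1 kq] .
  have bag: "bag_measure (gauss S) (\<lambda>x. pos (rstar \<bullet> x)) q k = B.bag"
    unfolding bag_measure_def B.bag_def B.C_def ..
  have "quad (Sigma_B (gauss S) (\<lambda>x. pos (rstar \<bullet> x)) q k) r = quad S r - B.cc^2 * (r \<bullet> mvec)^2"
    unfolding B.SB_eq[OF bag] using quad_rank1[of 1 S "B.cc^2" mvec r] by simp
  then show "quad (Sigma_B (gauss S) (\<lambda>x. pos (rstar \<bullet> x)) q k) r =
           quad S r - ((2 * real k - real q) / real q)^2 * ((2 / pi) * (r \<bullet> (S *v rstar))^2 / sst)"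
    unfolding rm_sq B.cc_def .
  have "quad (Sigma_D (gauss S) (\<lambda>x. pos (rstar \<bullet> x)) q k) r = 2 * quad S r - B.dd * (r \<bullet> mvec)^2"
    unfolding B.SD_eq[OF bag q] using quad_rank1[of 2 S "B.dd" mvec r] by simp
  then show "quad (Sigma_D (gauss S) (\<lambda>x. pos (rstar \<bullet> x)) q k) r =
           2 * quad S r - (2 * ((2 * real k - real q)^2 - real q) / (real q * (real q - 1))) * ((2 / pi) * (r \<bullet> (S *v rstar))^2 / sst)"
    unfolding rm_sq B.dd_def .
qed

end

(* ---- part 11 ---- *)
lemma ratio_mono:
  fixes g k1 k2 :: real
  assumes g0: "0 \<le> g" and g1: "g \<le> 1" and k1: "0 \<le> k1" "k1 < 1" and k2: "0 \<le> k2"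
  shows "2 + g * k2 / (1 - g * k1) \<le> 2 + k2 / (1 - k1)"
proof -
  have gk: "g * k1 \<le> k1" using mult_right_mono[OF g1 k1(1)] by simp
  have d2: "0 < 1 - k1" using k1 by simp
  have "g * k2 / (1 - g * k1) \<le> k2 / (1 - k1)"
  proof (rule frac_le)
    show "0 \<le> k2" by (rule k2)
    show "g * k2 \<le> k2" using mult_right_mono[OF g1 k2] by simp
    show "0 < 1 - k1" by (rule d2)
    show "1 - k1 \<le> 1 - g * k1" using gk by simp
  qed
  then show ?thesis by simp
qed

theorem lemma6:
  fixes S :: "real^'d^'d" and rstar :: "real^'d" and q k :: nat
  assumes symm: "transpose S = S"
    and posdef: "\<forall>x. x \<noteq> 0 \<longrightarrow> x \<bullet> (S *v x) > 0"
    and rstar_nz: "rstar \<noteq> 0"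
    and q: "q \<ge> 2" and k1: "1 \<le> k" and k2: "k \<le> q - 1"
  defines "SB \<equiv> Sigma_B (gauss S) (\<lambda>x. pos (rstar \<bullet> x)) q k"
    and "SD \<equiv> Sigma_D (gauss S) (\<lambda>x. pos (rstar \<bullet> x)) q k"
    and "\<kappa>1 \<equiv> (2 * real k / real q - 1)^2 * (2 / pi)"
    and "\<kappa>2 \<equiv> (1 / (real q - 1)) * (real k / real q) * (1 - real k / real q) * (16 / pi)"
    and "\<rho> \<equiv> (\<lambda>r. quad (Sigma_D (gauss S) (\<lambda>x. pos (rstar \<bullet> x)) q k) r / quad (Sigma_B (gauss S) (\<lambda>x. pos (rstar \<bullet> x)) q k) r)"
    and "\<gamma> \<equiv> (\<lambda>r. (r \<bullet> (S *v rstar)) / (sqrt (quad S r) * sqrt (quad S rstar)))"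
  shows "\<forall>r. r \<noteq> 0 \<longrightarrow>
           quad SB r = quad S r * (1 - (\<gamma> r)^2 * \<kappa>1)
         \<and> quad SD r = quad S r * (2 - (\<gamma> r)^2 * (2 * \<kappa>1 - \<kappa>2))
         \<and> \<rho> r = 2 + (\<gamma> r)^2 * \<kappa>2 / (1 - (\<gamma> r)^2 * \<kappa>1)
         \<and> \<rho> r \<le> \<rho> rstar \<and> \<rho> r \<le> \<rho> (- rstar)"
proof -
  interpret G: gset S rstar
    using symm posdef rstar_nz by (rule gset.intro)
  obtain A where A: "transpose A ** G.P ** A = mat 1" "\<forall>i. A$i$(undefined::'d) = G.e1$i"
    using exists_A[OF G.symP G.posP G.e1, of undefined] by blast
  interpret GA: gsetA S rstar A undefined
    using A by unfold_locales
  have qpos: "real q > 1" using q by simp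
  have kq: "real k \<le> real q" using k2 q by simp
  have kpos: "real k \<ge> 1" using k1 by simp
  have sst: "quad S rstar = G.sst" unfolding quad_def G.sst_def ..
  have sstp: "G.sst > 0" by (rule G.sst_pos)
  define c where "c = 2 * real k / real q - 1"
  have cc: "(2 * real k - real q) / real q = c" unfolding c_def using qpos by (simp add: field_simps)
  have c2: "c^2 \<le> 1"
  proof -
    have "-1 \<le> c" "c \<le> 1" unfolding c_def using qpos kq by (simp_all add: field_simps)
    then have "\<bar>c\<bar> \<le> \<bar>1\<bar>" by simp
    then show ?thesis unfolding abs_le_square_iff by simp
  qed
  have k1eq: "\<kappa>1 = c^2 * (2 / pi)" unfolding \<kappa>1_def c_def ..
  have k1nn: "0 \<le> \<kappa>1" unfolding k1eq by simp
  have k1lt: "\<kappa>1 < 1"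
  proof -
    have "\<kappa>1 \<le> 2 / pi" unfolding k1eq using mult_right_mono[OF c2, of "2 / pi"] by simp
    also have "2 / pi < 1" using pi_gt3 by simp
    finally show ?thesis .
  qed
  have kq1: "real k / real q \<le> 1" using kq qpos by simp
  have k2nn: "0 \<le> \<kappa>2" unfolding \<kappa>2_def using qpos kq1
    by (intro mult_nonneg_nonneg) auto
  have ddk: "2 * ((2 * real k - real q)^2 - real q) / (real q * (real q - 1)) * (2 / pi) = 2 * \<kappa>1 - \<kappa>2"
    unfolding \<kappa>1_def \<kappa>2_def using qpos by (simp add: field_simps power2_eq_square)
  have main: "quad SB r = quad S r * (1 - (\<gamma> r)^2 * \<kappa>1)
         \<and> quad SD r = quad S r * (2 - (\<gamma> r)^2 * (2 * \<kappa>1 - \<kappa>2))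
         \<and> \<rho> r = 2 + (\<gamma> r)^2 * \<kappa>2 / (1 - (\<gamma> r)^2 * \<kappa>1)
         \<and> 0 \<le> (\<gamma> r)^2 \<and> (\<gamma> r)^2 \<le> 1" if r: "r \<noteq> 0" for r
  proof -
    have H: "\<And>X a b s::real. X * (a * b / s) = (X * a) * (b / s)" by (simp add: divide_inverse mult_ac)
    define t where "t = r \<bullet> (S *v rstar)"
    define \<sigma> where "\<sigma> = quad S r"
    have sp: "\<sigma> > 0" unfolding \<sigma>_def quad_def using posdef r by blast
    have g: "(\<gamma> r)^2 = t^2 / (\<sigma> * G.sst)"
      unfolding \<gamma>_def t_def[symmetric] \<sigma>_def[symmetric] sst using sp sstp
      by (simp add: power_divide power_mult_distrib)
    have sg: "\<sigma> * (\<gamma> r)^2 = t^2 / G.sst" unfolding g using sp by simp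
    have g1: "(\<gamma> r)^2 \<le> 1"
      unfolding g using G.cs[of r] sp sstp unfolding t_def[symmetric] \<sigma>_def quad_def
      by (simp add: divide_le_eq)
    have fB: "quad SB r = \<sigma> * (1 - (\<gamma> r)^2 * \<kappa>1)"
    proof -
      have "quad SB r = \<sigma> - (c^2 * (2 / pi)) * (t^2 / G.sst)"
        unfolding SB_def GA.formulas(1)[OF q k1 k2, of r] cc \<sigma>_def[symmetric] t_def[symmetric] H ..
      also have "\<dots> = \<sigma> * (1 - (\<gamma> r)^2 * \<kappa>1)"
        unfolding k1eq[symmetric] sg[symmetric] by (simp add: algebra_simps)
      finally show ?thesis .
    qed
    have fD: "quad SD r = \<sigma> * (2 - (\<gamma> r)^2 * (2 * \<kappa>1 - \<kappa>2))"
    proof -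
      have "quad SD r = 2 * \<sigma> - (2 * ((2 * real k - real q)^2 - real q) / (real q * (real q - 1)) * (2 / pi)) * (t^2 / G.sst)"
        unfolding SD_def GA.formulas(2)[OF q k1 k2, of r] \<sigma>_def[symmetric] t_def[symmetric] H ..
      also have "\<dots> = \<sigma> * (2 - (\<gamma> r)^2 * (2 * \<kappa>1 - \<kappa>2))"
        unfolding ddk sg[symmetric] by (simp add: algebra_simps)
      finally show ?thesis .
    qed
    have den: "0 < 1 - (\<gamma> r)^2 * \<kappa>1"
      using mult_right_mono[OF g1 k1nn] k1lt by simp
    have fr: "\<rho> r = 2 + (\<gamma> r)^2 * \<kappa>2 / (1 - (\<gamma> r)^2 * \<kappa>1)"
    proof -
      have "\<rho> r = quad SD r / quad SB r" unfolding \<rho>_def SD_def SB_def ..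
      also have "\<dots> = (2 - (\<gamma> r)^2 * (2 * \<kappa>1 - \<kappa>2)) / (1 - (\<gamma> r)^2 * \<kappa>1)"
        unfolding fB fD using sp by simp
      also have "\<dots> = 2 + (\<gamma> r)^2 * \<kappa>2 / (1 - (\<gamma> r)^2 * \<kappa>1)"
        using den by (simp add: field_simps)
      finally show ?thesis .
    qed
    show ?thesis using fB fD fr g1 unfolding \<sigma>_def by simp
  qed
  have gs1: "(\<gamma> rstar)^2 = 1"
    unfolding \<gamma>_def sst using sstp G.sst_def by (simp add: power_divide power_mult_distrib)
  have gs2: "(\<gamma> (- rstar))^2 = 1"
  proof -
    have neg: "S *v (- rstar) = - (S *v rstar)" by (simp add: vec_eq_iff matrix_vector_mult_def sum_negf)
    have "quad S (- rstar) = G.sst" unfolding quad_def G.sst_def neg by simp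
    then show ?thesis
      unfolding \<gamma>_def sst using sstp G.sst_def by (simp add: power_divide power_mult_distrib)
  qed
  have rs: "\<rho> rstar = 2 + \<kappa>2 / (1 - \<kappa>1)" using main[OF rstar_nz] gs1 by simp
  have rs2: "\<rho> (- rstar) = 2 + \<kappa>2 / (1 - \<kappa>1)" using main[of "- rstar"] rstar_nz gs2 by simp
  show ?thesis
  proof (intro allI impI)
    fix r :: "real^'d" assume r: "r \<noteq> 0"
    note m = main[OF r]
    have le: "\<rho> r \<le> 2 + \<kappa>2 / (1 - \<kappa>1)"
      unfolding conjunct1[OF conjunct2[OF conjunct2[OF m]]]
      by (rule ratio_mono) (use m k1nn k1lt k2nn in auto)
    show "quad SB r = quad S r * (1 - (\<gamma> r)^2 * \<kappa>1)
         \<and> quad SD r = quad S r * (2 - (\<gamma> r)^2 * (2 * \<kappa>1 - \<kappa>2))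
         \<and> \<rho> r = 2 + (\<gamma> r)^2 * \<kappa>2 / (1 - (\<gamma> r)^2 * \<kappa>1)
         \<and> \<rho> r \<le> \<rho> rstar \<and> \<rho> r \<le> \<rho> (- rstar)"
      using m le rs rs2 by simp
  qed
qed

end
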